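(* Let $p=ef+1$ be an odd prime with $e,f$ positive integers and $f$ even, and assume $2^{p-1}\not\equiv1\pmod{p^2}$. Let $n\ge1$, $g$ an odd primitive root modulo $p^n$, $b$ an integer with $0\le b<p^{n-1}f$, and let $\alpha_n$ be a primitive $p^n$-th root of unity in an algebraic closure of $\mathbb{F}_2$. Then $S(\alpha_n^i)\neq0$ and $\widetilde S(\alpha_n^i)\neq0$ for every $i\in\mathbb{Z}_{p^n}\setminus p^{n-1}\mathbb{Z}_p$, where $p^{n-1}\mathbb{Z}_p=\{p^{n-1}k \bmod p^n: k\in\mathbb{Z}\}$.
   Context: For $1\le j\le n$ let $d_j=p^{j-1}f$, $D^{(2p^j)}_0=\{g^{td_j}\bmod 2p^j:0\le t<e\}$ and $D^{(2p^j)}_i=\{g^ix\bmod 2p^j:x\in D^{(2p^j)}_0\}$ for $0\le i<d_j$, subscripts taken modulo $d_j$. For $A\subseteq\mathbb{Z}_{2p^j}$ let $2A=\{2x\bmod 2p^j:x\in A\}$ and $p^{n-j}A=\{p^{n-j}x\bmod 2p^n:x\in A\}$. Let $\mathcal{C}_1=\bigcup_{j=1}^{n}\bigcup_{i=0}^{d_j/2-1} p^{n-j}\big(D^{(2p^j)}_{i+b}\cup 2D^{(2p^j)}_{i+b}\big)\cup\{0\}$ and $\widetilde{\mathcal{C}}_1=\bigcup_{j=1}^{n}p^{n-j}\Big(\bigcup_{i=0}^{d_j/2-1} D^{(2p^j)}_{i+b}\cup\bigcup_{i=d_j/2}^{d_j-1}2D^{(2p^j)}_{i+b}\Big)\cup\{0\}$,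 subsets of $\mathbb{Z}_{2p^n}=\{0,\dots,2p^n-1\}$, and $S(x)=\sum_{t\in\mathcal{C}_1}x^t$, $\widetilde S(x)=\sum_{t\in\widetilde{\mathcal{C}}_1}x^t$ in $\mathbb{F}_2[x]$. *)

theory Defs
  imports "HOL-Number_Theory.Number_Theory" "HOL-Computational_Algebra.Polynomial"
begin

definition dd :: "nat \<Rightarrow> nat \<Rightarrow> nat \<Rightarrow> nat" where
  "dd p f j = p ^ (j - 1) * f"

definition D0 :: "nat \<Rightarrow> nat \<Rightarrow> nat \<Rightarrow> nat \<Rightarrow> nat \<Rightarrow> nat set" where
  "D0 p e f g j = {g ^ (t * dd p f j) mod (2 * p ^ j) | t. t < e}"

definition Dc :: "nat \<Rightarrow> nat \<Rightarrow> nat \<Rightarrow> nat \<Rightarrow> nat \<Rightarrow> nat \<Rightarrow> nat set" where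
  "Dc p e f g j i = {(g ^ (i mod dd p f j) * x) mod (2 * p ^ j) | x. x \<in> D0 p e f g j}"

definition twice :: "nat \<Rightarrow> nat \<Rightarrow> nat set \<Rightarrow> nat set" where
  "twice p j A = (\<lambda>x. (2 * x) mod (2 * p ^ j)) ` A"

definition lift :: "nat \<Rightarrow> nat \<Rightarrow> nat \<Rightarrow> nat set \<Rightarrow> nat set" where
  "lift p n j A = (\<lambda>x. (p ^ (n - j) * x) mod (2 * p ^ n)) ` A"

definition C1 :: "nat \<Rightarrow> nat \<Rightarrow> nat \<Rightarrow> nat \<Rightarrow> nat \<Rightarrow> nat \<Rightarrow> nat set" where
  "C1 p e f g n b =
     (\<Union>j\<in>{1..n}. \<Union>i\<in>{0..<dd p f j div 2}.
        lift p n j (Dc p e f g j (i + b) \<union> twice p j (Dc p e f g j (i + b)))) \<union> {0}"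

definition C1t :: "nat \<Rightarrow> nat \<Rightarrow> nat \<Rightarrow> nat \<Rightarrow> nat \<Rightarrow> nat \<Rightarrow> nat set" where
  "C1t p e f g n b =
     (\<Union>j\<in>{1..n}. lift p n j
        ((\<Union>i\<in>{0..<dd p f j div 2}. Dc p e f g j (i + b)) \<union>
         (\<Union>i\<in>{dd p f j div 2..<dd p f j}. twice p j (Dc p e f g j (i + b))))) \<union> {0}"

text \<open>The polynomial \<Sum>_{t\<in>C} x^t with all coefficients 1 (image of the F_2 polynomial
  in any ring, in particular any field of characteristic 2).\<close>
definition ind_poly :: "nat set \<Rightarrow> 'a::comm_ring_1 poly" where
  "ind_poly C = (\<Sum>t\<in>C. monom 1 t)"

definition primitive_root_of_unity :: "nat \<Rightarrow> 'a::field \<Rightarrow> bool" where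
  "primitive_root_of_unity m a \<longleftrightarrow> a ^ m = 1 \<and> (\<forall>k. 0 < k \<and> k < m \<longrightarrow> a ^ k \<noteq> 1)"

end

theory Submission
  imports Defs
begin


lemma char2_of_nat:
  assumes "CHAR('a::field) = 2"
  shows "(of_nat k :: 'a) = (if even k then 0 else 1)"
proof -
  have z: "(of_nat (2 * (k div 2)) :: 'a) = 0" using assms by (subst of_nat_eq_0_iff_char_dvd) simp
  have "(of_nat k :: 'a) = of_nat (2 * (k div 2) + k mod 2)" by simp
  also have "\<dots> = of_nat (2 * (k div 2)) + of_nat (k mod 2)" by (rule of_nat_add)
  also have "\<dots> = of_nat (k mod 2)" using z by simp
  finally show ?thesis by (cases "even k") (auto simp: odd_iff_mod_2_eq_one)
qed

lemma char2_two: "CHAR('a::field) = 2 \<Longrightarrow> (2::'a) = 0"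
  using char2_of_nat[where 'a='a, of 2] by simp

lemma char2_add_self: "CHAR('a::field) = 2 \<Longrightarrow> (x::'a) + x = 0"
proof -
  assume "CHAR('a) = 2"
  then have "(2::'a) = 0" by (rule char2_two)
  then show "x + x = 0" by (metis mult_2 mult_zero_left)
qed

lemma char2_minus: "CHAR('a::field) = 2 \<Longrightarrow> - (x::'a) = x"
  using char2_add_self[of x] by (metis add_eq_0_iff)

lemma char2_sq_add: "CHAR('a::field) = 2 \<Longrightarrow> ((x::'a) + y)^2 = x^2 + y^2"
proof -
  assume c: "CHAR('a) = 2"
  have "(x+y)^2 = x^2 + y^2 + 2 * x * y" by (simp add: power2_sum)
  moreover have "2 * x * y = 0" by (metis mult_zero_left char2_two[OF c])
  ultimately show ?thesis by simp
qed

lemma char2_sum_sq: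
  assumes "CHAR('a::field) = 2"
  shows "(\<Sum>x\<in>A. (h x :: 'a))^2 = (\<Sum>x\<in>A. (h x)^2)"
proof (cases "finite A")
  case True then show ?thesis
    by (induction A rule: finite_induct) (auto simp: char2_sq_add[OF assms])
qed simp

lemma char2_sum_pow2:
  assumes "CHAR('a::field) = 2"
  shows "(\<Sum>x\<in>A. (h x :: 'a))^(2^w) = (\<Sum>x\<in>A. (h x)^(2^w))"
proof (induction w)
  case (Suc w)
  have e: "\<And>y::'a. y^(2^Suc w) = (y^(2^w))^2"
    by (simp add: power_mult[symmetric] mult.commute)
  have "(\<Sum>x\<in>A. h x)^(2^Suc w) = ((\<Sum>x\<in>A. h x)^(2^w))^2" by (rule e)
  also have "\<dots> = (\<Sum>x\<in>A. (h x)^(2^w))^2" using Suc by simp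
  also have "\<dots> = (\<Sum>x\<in>A. ((h x)^(2^w))^2)" by (rule char2_sum_sq[OF assms])
  also have "\<dots> = (\<Sum>x\<in>A. (h x)^(2^Suc w))" by (simp only: e)
  finally show ?case .
qed simp

lemma char2_odd: "CHAR('a::field) = 2 \<Longrightarrow> odd k \<Longrightarrow> (of_nat k :: 'a) * x = x"
  using char2_of_nat[where 'a='a, of k] by simp

lemma geom_root_sum:
  fixes \<eta> :: "'a::field"
  assumes "\<eta> ^ k = 1" "\<eta> \<noteq> 1"
  shows "(\<Sum>t<k. \<eta> ^ t) = 0"
  using assms by (simp add: sum_gp_strict)

lemma lift_one:
  assumes p: "prime (p::nat)" and k: "k \<ge> 1" and a: "[a = 1] (mod p ^ k)"
  shows "[a ^ p = 1] (mod p ^ Suc k)"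
proof -
  have a1: "[a = 1] (mod p)" using cong_dvd_modulus_nat[OF a dvd_power[of k p]] k by simp
  have pk: "p ^ k > 1" using prime_gt_1_nat[OF p] k by (intro one_less_power) auto
  have "a \<noteq> 0"
  proof
    assume "a = 0"
    then have "0 mod p ^ k = 1 mod p ^ k" using a by (simp add: cong_def)
    then show False using pk k prime_gt_1_nat[OF p] by auto
  qed
  then have a0: "a \<ge> 1" by simp
  obtain c where c: "a - 1 = p ^ k * c" using a a0 by (metis cong_to_1_nat dvd_def)
  have s: "[(\<Sum>r<p. a ^ r) = (\<Sum>r<p. 1)] (mod p)"
    by (intro cong_sum) (metis a1 cong_pow power_one)
  then have "(\<Sum>r<p. a ^ r) mod p = 0" by (simp add: cong_def)
  then have "p dvd (\<Sum>r<p. a ^ r)" by (simp add: dvd_eq_mod_eq_0)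
  then obtain z where z: "(\<Sum>r<p. a ^ r) = p * z" by auto
  have "a ^ p - 1 = (a - 1) * (\<Sum>r<p. a ^ r)"
  proof -
    have "int (a ^ p - 1) = int a ^ p - 1" using a0 by (simp add: of_nat_diff)
    also have "\<dots> = (int a - 1) * (\<Sum>r<p. int a ^ r)" by (simp add: power_diff_1_eq)
    also have "\<dots> = int ((a - 1) * (\<Sum>r<p. a ^ r))" using a0 by (simp add: of_nat_diff)
    finally show ?thesis by linarith
  qed
  also have "\<dots> = p ^ Suc k * (c * z)" using c z by simp
  finally have "p ^ Suc k dvd a ^ p - 1" by simp
  moreover have "a ^ p \<ge> 1" using a0 by simp
  ultimately show ?thesis by (simp add: cong_altdef_nat)
qed

lemma lift_pow:
  assumes p: "prime (p::nat)" and k: "k \<ge> 1" and a: "[a = 1] (mod p ^ k)"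
  shows "[a ^ (p ^ s) = 1] (mod p ^ (k + s))"
proof (induction s)
  case 0 then show ?case using a by simp
next
  case (Suc s)
  have "[(a ^ (p ^ s)) ^ p = 1] (mod p ^ Suc (k + s))"
    by (rule lift_one[OF p _ Suc]) (use k in simp)
  then show ?case by (simp add: power_mult[symmetric] mult.commute)
qed

lemma primroot_ord_down:
  assumes p: "prime (p::nat)" and g: "residue_primroot (p ^ n) g" and m: "1 \<le> m" "m \<le> n"
  shows "ord (p ^ m) g = p ^ (m - 1) * (p - 1)"
proof -
  have cn: "coprime (p ^ n) g" using g by (simp add: residue_primroot_def)
  then have cg: "coprime p g" using m by (metis coprime_power_left_iff le_zero_eq not_one_le_zero)
  then have cm: "coprime (p ^ m) g" by simp
  have on: "ord (p ^ n) g = p ^ (n - 1) * (p - 1)"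
    using g p m by (simp add: residue_primroot_def totient_prime_power)
  define od where "od = ord (p ^ m) g"
  have "[g ^ od = 1] (mod p ^ m)" unfolding od_def by (rule ord_works[THEN conjunct1])
  then have "[(g ^ od) ^ (p ^ (n - m)) = 1] (mod p ^ (m + (n - m)))"
    by (rule lift_pow[OF p m(1)])
  then have "[g ^ (od * p ^ (n - m)) = 1] (mod p ^ n)" using m by (simp add: power_mult)
  then have "ord (p ^ n) g dvd od * p ^ (n - m)" by (simp add: ord_divides')
  then have "p ^ (n - m) * (p ^ (m - 1) * (p - 1)) dvd p ^ (n - m) * od"
    using on m by (simp add: power_add[symmetric] mult.commute mult.left_commute)
  then have d1: "p ^ (m - 1) * (p - 1) dvd od"
    using nat_mult_dvd_cancel1[of "p ^ (n - m)"] prime_gt_0_nat[OF p] by simp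
  have "[g ^ totient (p ^ m) = 1] (mod p ^ m)"
    by (rule euler_theorem) (use cm in \<open>simp add: coprime_commute\<close>)
  then have "od dvd totient (p ^ m)" unfolding od_def by (simp add: ord_divides')
  then have "od dvd p ^ (m - 1) * (p - 1)" using p m by (simp add: totient_prime_power)
  with d1 show ?thesis unfolding od_def by (simp add: dvd_antisym)
qed

lemma primroot_exp_cong:
  assumes p: "prime (p::nat)" and g: "residue_primroot (p ^ n) g" and m: "1 \<le> m" "m \<le> n"
  shows "[g ^ x = g ^ y] (mod p ^ m) \<longleftrightarrow> [x = y] (mod p ^ (m - 1) * (p - 1))"
proof -
  have cn: "coprime (p ^ n) g" using g by (simp add: residue_primroot_def)
  then have cg: "coprime p g" using m by (metis coprime_power_left_iff le_zero_eq not_one_le_zero)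
  then have cm: "coprime (p ^ m) g" by simp
  show ?thesis using order_divides_expdiff[OF cm] primroot_ord_down[OF p g m] by simp
qed


locale psetup =
  fixes p e f g n b :: nat
  assumes prime: "prime p" and oddp: "odd p" and pef: "p = e * f + 1" and e0: "e > 0" and f0: "f > 0"
    and evf: "even f" and nonW: "\<not> [2 ^ (p - 1) = 1] (mod p ^ 2)" and n1: "n \<ge> 1"
    and oddg: "odd g" and prim: "residue_primroot (p ^ n) g"
begin

definition d :: "nat \<Rightarrow> nat" where "d j = p ^ (j - 1) * f"
definition kk :: "nat \<Rightarrow> nat \<Rightarrow> nat \<Rightarrow> nat" where "kk j i t = (i + b) mod d j + t * d j"

lemma p_gt1: "p > 1" using prime_gt_1_nat[OF prime] .
lemma p_ge3: "p \<ge> 3" using p_gt1 oddp by presburger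
lemma p_pos: "p > 0" using p_gt1 by simp

lemma exp_cong: "1 \<le> j \<Longrightarrow> j \<le> n \<Longrightarrow> [g ^ x = g ^ y] (mod p ^ j) \<longleftrightarrow> [x = y] (mod p ^ (j - 1) * (p - 1))"
  by (rule primroot_exp_cong[OF prime prim])

lemma coprime_pg: "coprime p g"
proof -
  have "coprime (p ^ n) g" using prim by (simp add: residue_primroot_def)
  then show ?thesis using n1 by (metis coprime_power_left_iff le_zero_eq not_one_le_zero)
qed

lemma not_dvd_gpow: "\<not> p dvd g ^ k"
proof
  assume a: "p dvd g ^ k"
  have "coprime p (g ^ k)" using coprime_pg by simp
  then have "is_unit p" using a by (metis coprime_common_divisor dvd_refl)
  then show False using p_gt1 by simp
qed

lemma p_not_dvd_e: "\<not> p dvd e"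
proof
  assume "p dvd e"
  then have "p \<le> e" using e0 by (simp add: dvd_imp_le)
  moreover have "e \<le> p - 1" using pef f0 by simp
  ultimately show False using p_gt1 by simp
qed

end


locale msetup = psetup +
  fixes m :: nat
  assumes m2: "2 \<le> m" and mn: "m \<le> n"
begin

lemma n2: "n \<ge> 2" using m2 mn by simp

definition N :: nat where "N = p ^ (n - 1) * (p - 1)"

definition e' :: nat where "e' = (SOME x. [e * x = 1] (mod p ^ (n - 1)))"

lemma ee': "[e * e' = 1] (mod p ^ (n - 1))"
proof -
  have "coprime e p" using prime_imp_coprime[OF prime p_not_dvd_e] by (simp add: coprime_commute)
  then have "coprime e (p ^ (n - 1))" by simp
  then have "\<exists>x. [e * x = 1] (mod p ^ (n - 1))" using cong_solve_coprime_nat by auto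
  then show ?thesis unfolding e'_def by (rule someI_ex)
qed

lemma p_not_dvd_e': "\<not> p dvd e'"
proof
  assume "p dvd e'"
  then have "p dvd e * e'" by simp
  moreover have "[e * e' = 1] (mod p)"
    using cong_dvd_modulus_nat[OF ee', of p] n2 by (simp add: dvd_power)
  ultimately have "p dvd 1" by (metis cong_dvd_iff)
  then show False using p_gt1 by simp
qed

definition r :: nat where "r = (SOME x. x < N \<and> g ^ x mod p ^ n = 2)"

lemma r_prop: "r < N \<and> g ^ r mod p ^ n = 2"
proof -
  have pn: "p ^ n > 1" using p_gt1 n1 by (intro one_less_power) auto
  have "residue_primroot (p ^ n) g" by (rule prim)
  from residue_primroot_is_generator[OF pn this]
  have "(\<lambda>i. g ^ i mod p ^ n) ` {..<totient (p ^ n)} = totatives (p ^ n)" by (simp add: bij_betw_def)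
  moreover have "2 \<in> totatives (p ^ n)"
  proof -
    have "p ^ n \<ge> p" using n1 p_pos by (simp add: self_le_power)
    then have "2 \<le> p ^ n" using p_ge3 by simp
    moreover have "coprime 2 (p ^ n)" using oddp by simp
    ultimately show ?thesis by (simp add: totatives_def)
  qed
  ultimately obtain x where "x < totient (p ^ n)" "g ^ x mod p ^ n = 2" by force
  moreover have "totient (p ^ n) = N" unfolding N_def using prime n1 by (simp add: totient_prime_power)
  ultimately have "\<exists>x. x < N \<and> g ^ x mod p ^ n = 2" by auto
  then show ?thesis unfolding r_def by (rule someI_ex)
qed

lemma g_r: "[g ^ r = 2] (mod p ^ n)"
  using r_prop p_ge3 n1 unfolding cong_def
  by (metis mod_less mod_mod_trivial)

lemma p_not_dvd_r: "\<not> p dvd r"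
proof
  assume "p dvd r"
  then obtain r' where r': "r = p * r'" by auto
  have "[(g ^ r) ^ (p - 1) = 2 ^ (p - 1)] (mod p ^ n)" by (rule cong_pow[OF g_r])
  then have "[(g ^ r) ^ (p - 1) = 2 ^ (p - 1)] (mod p ^ 2)"
    by (rule cong_dvd_modulus_nat) (use n2 in \<open>simp add: le_imp_power_dvd\<close>)
  moreover have "[g ^ (r * (p - 1)) = g ^ 0] (mod p ^ 2)"
    using exp_cong[of 2 "r * (p - 1)" 0] n2 r' by (simp add: cong_0_iff)
  ultimately have "[2 ^ (p - 1) = 1] (mod p ^ 2)"
    by (metis cong_sym cong_trans power_0 power_mult)
  then show False using nonW by simp
qed

definition v :: nat where "v = (SOME x. [r * x = e'] (mod p ^ (n - 1)))"

lemma rv: "[r * v = e'] (mod p ^ (n - 1))"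
proof -
  have "coprime r p" using prime_imp_coprime[OF prime p_not_dvd_r] by (simp add: coprime_commute)
  then have "coprime r (p ^ (n - 1))" by simp
  from cong_solve_coprime_nat[OF this] obtain x where x: "[r * x = 1] (mod p ^ (n - 1))" by auto
  have "[r * (x * e') = 1 * e'] (mod p ^ (n - 1))"
    using cong_mult[OF x cong_refl[of e']] by (simp add: mult.assoc)
  then have "\<exists>y. [r * y = e'] (mod p ^ (n - 1))" by auto
  then show ?thesis unfolding v_def by (rule someI_ex)
qed

definition pp :: nat where "pp = g ^ ((p - 1) * e')"

lemma pp_two: "[pp = 2 ^ ((p - 1) * v)] (mod p ^ n)"
proof -
  have "[(g ^ r) ^ ((p - 1) * v) = 2 ^ ((p - 1) * v)] (mod p ^ n)" by (rule cong_pow[OF g_r])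
  moreover have "[g ^ ((p - 1) * e') = g ^ (r * ((p - 1) * v))] (mod p ^ n)"
  proof -
    have "[(p - 1) * e' = (p - 1) * (r * v)] (mod (p - 1) * p ^ (n - 1))"
      using rv unfolding cong_def by (simp add: mod_mult_mult1 cong_sym_eq)
    then show ?thesis using exp_cong[of n] n1
      by (simp add: mult.commute mult.left_commute)
  qed
  ultimately show ?thesis unfolding pp_def by (metis cong_trans power_mult)
qed

lemma pp_mod_p: "[pp = 1] (mod p)"
  using exp_cong[of 1 "(p - 1) * e'" 0] n1 unfolding pp_def by (simp add: cong_0_iff)

lemma coprime_pp: "\<not> p dvd pp ^ s"
  unfolding pp_def power_mult[symmetric] by (rule not_dvd_gpow)

end


context msetup begin

definition kap :: nat where "kap = pp ^ (p ^ (m - 2))"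

lemma kap_g: "kap = g ^ ((p - 1) * e' * p ^ (m - 2))"
  unfolding kap_def pp_def by (simp add: power_mult)

lemma kap_1: "[kap = 1] (mod p ^ (m - 1))"
proof -
  have "[g ^ ((p - 1) * e' * p ^ (m - 2)) = g ^ 0] (mod p ^ (m - 1))"
    using exp_cong[of "m - 1" "(p - 1) * e' * p ^ (m - 2)" 0] m2 mn
    by (simp add: cong_0_iff numeral_2_eq_2)
  then show ?thesis by (simp add: kap_g)
qed

lemma kap_not1: "\<not> [kap = 1] (mod p ^ m)"
proof
  assume "[kap = 1] (mod p ^ m)"
  then have "[g ^ ((p - 1) * e' * p ^ (m - 2)) = g ^ 0] (mod p ^ m)" by (simp add: kap_g)
  then have "p ^ (m - 1) * (p - 1) dvd (p - 1) * e' * p ^ (m - 2)"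
    using exp_cong[of m "(p - 1) * e' * p ^ (m - 2)" 0] m2 mn by (simp add: cong_0_iff)
  moreover have "p ^ (m - 1) * (p - 1) = (p - 1) * p ^ (m - 2) * p"
  proof -
    have "m - 1 = Suc (m - 2)" using m2 by simp
    then show ?thesis by (simp add: mult.commute)
  qed
  ultimately have "((p - 1) * p ^ (m - 2)) * p dvd ((p - 1) * p ^ (m - 2)) * e'"
    by (metis mult.commute mult.left_commute)
  moreover have "0 < (p - 1) * p ^ (m - 2)" using p_gt1 by simp
  ultimately have "p dvd e'" using nat_mult_dvd_cancel1 by blast
  then show False using p_not_dvd_e' by simp
qed

definition c :: nat where "c = (SOME x. kap = 1 + x * p ^ (m - 1))"

lemma kap_c: "kap = 1 + c * p ^ (m - 1)"
proof -
  have "\<exists>x. kap = 1 + x * p ^ (m - 1)"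
  proof -
    have "p ^ (m - 1) > 1" using p_gt1 m2 by (intro one_less_power) auto
    then show ?thesis using kap_1 unfolding cong_to_1'_nat by auto
  qed
  then show ?thesis unfolding c_def by (rule someI_ex)
qed

lemma p_not_dvd_c: "\<not> p dvd c"
proof
  assume "p dvd c"
  then obtain z where "c = p * z" by auto
  moreover have "p ^ m = p * p ^ (m - 1)" using m2 by (metis Suc_diff_1 le_trans one_le_numeral not_one_le_zero not_less_eq_eq power_Suc zero_less_iff_neq_zero zero_less_Suc)
  ultimately have "kap = 1 + z * p ^ m" using kap_c by simp
  moreover have "[1 + z * p ^ m = 1] (mod p ^ m)" unfolding cong_def by (metis mod_mult_self1)
  ultimately have "[kap = 1] (mod p ^ m)" by simp
  then show False using kap_not1 by simp
qed

lemma kap_pow: "[kap ^ t = 1 + t * c * p ^ (m - 1)] (mod p ^ m)"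
proof (induction t)
  case 0 then show ?case by simp
next
  case (Suc t)
  have "[kap ^ Suc t = (1 + t * c * p ^ (m - 1)) * kap] (mod p ^ m)"
    using cong_mult[OF Suc cong_refl[of kap]] by (simp add: mult.commute)
  also have "(1 + t * c * p ^ (m - 1)) * kap = (1 + Suc t * c * p ^ (m - 1)) + (t * c * c * p ^ (m - 2)) * p ^ m"
  proof -
    have e1: "p ^ (m - 1) * p ^ (m - 1) = p ^ (m - 2) * p ^ m"
    proof -
      have "(m - 1) + (m - 1) = (m - 2) + m" using m2 by simp
      then show ?thesis by (metis power_add)
    qed
    have e2: "p ^ (m - 1) * p ^ (m - 1) = p ^ m * p ^ (m - 2)" using e1 by simp
    show ?thesis unfolding kap_c using e2
      by (simp add: algebra_simps)
  qed
  also have "[\<dots> = 1 + Suc t * c * p ^ (m - 1)] (mod p ^ m)"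
    by (simp add: cong_def)
  finally show ?case .
qed

lemma kap_pow_1: "[kap ^ t = 1] (mod p ^ (m - 1))"
  using cong_pow[OF kap_1, of t] by simp

definition L :: nat where "L = (p ^ (n - 1) + 1) div 2"

lemma two_L: "2 * L = p ^ (n - 1) + 1"
  unfolding L_def using oddp by simp

lemma p_not_dvd_L: "\<not> p dvd L"
proof
  assume "p dvd L"
  then have "p dvd p ^ (n - 1) + 1" by (metis two_L dvd_mult)
  moreover have "p dvd p ^ (n - 1)" using n2 by (simp add: dvd_power)
  ultimately have "p dvd 1" using dvd_add_right_iff by blast
  then show False using p_gt1 by simp
qed

end


locale core = msetup +
  fixes \<beta> :: "'a::field"
  assumes char: "CHAR('a) = 2" and beta: "\<And>x. \<beta> ^ x = 1 \<longleftrightarrow> p ^ m dvd x"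
begin

lemma beta_nz: "\<beta> \<noteq> 0"
proof
  assume "\<beta> = 0"
  then have "\<beta> ^ (p ^ m) = 0" using p_pos by simp
  moreover have "\<beta> ^ (p ^ m) = 1" using beta by simp
  ultimately show False by simp
qed

lemma pw_cong: "[x = y] (mod p ^ m) \<Longrightarrow> \<beta> ^ x = \<beta> ^ y"
proof -
  have *: "\<beta> ^ x = \<beta> ^ y" if "[x = y] (mod p ^ m)" "y \<le> x" for x y
  proof -
    have "p ^ m dvd x - y" using that by (simp add: cong_altdef_nat)
    then have b1: "\<beta> ^ (x - y) = 1" using beta by simp
    have "\<beta> ^ x = \<beta> ^ (y + (x - y))" using that(2) by simp
    also have "\<dots> = \<beta> ^ y * \<beta> ^ (x - y)" by (rule power_add)
    finally show ?thesis using b1 by simp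
  qed
  assume a: "[x = y] (mod p ^ m)"
  show ?thesis
  proof (cases "y \<le> x")
    case True then show ?thesis using *[OF a] by blast
  next
    case False then show ?thesis using *[OF cong_sym[OF a]] by simp
  qed
qed

lemma pw_eq: "\<beta> ^ x = \<beta> ^ y \<Longrightarrow> [x = y] (mod p ^ m)"
proof -
  have *: "[x = y] (mod p ^ m)" if "\<beta> ^ x = \<beta> ^ y" "y \<le> x" for x y
  proof -
    have "\<beta> ^ y * \<beta> ^ (x - y) = \<beta> ^ (y + (x - y))" by (rule power_add[symmetric])
    also have "\<dots> = \<beta> ^ x" using that(2) by simp
    finally have "\<beta> ^ y * \<beta> ^ (x - y) = \<beta> ^ y * 1" using that(1) by simp
    then have "\<beta> ^ (x - y) = 1" using beta_nz by simp
    then show ?thesis using beta that(2) by (simp add: cong_altdef_nat)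
  qed
  assume a: "\<beta> ^ x = \<beta> ^ y"
  show ?thesis
  proof (cases "y \<le> x")
    case True then show ?thesis using *[OF a] by blast
  next
    case False then show ?thesis using *[OF a[symmetric]] cong_sym by simp
  qed
qed

definition A :: 'a where
  "A = (\<Sum>j\<in>{1..n}. \<Sum>i<d j div 2. \<Sum>t<e. \<beta> ^ (p ^ (n - j) * g ^ kk j i t))"
definition Qf :: "nat \<Rightarrow> 'a" where
  "Qf s = (\<Sum>j\<in>{1..n}. \<Sum>i<d j div 2. \<Sum>t<e. \<beta> ^ (pp ^ s * (p ^ (n - j) * g ^ kk j i t)))"
definition Lf :: "nat \<Rightarrow> 'a" where
  "Lf s = (\<Sum>j\<in>{1..n-1}. \<Sum>i<d j div 2. \<Sum>t<e. \<beta> ^ (pp ^ s * (p ^ (n - j) * g ^ kk j i t)))"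
definition Ef :: "nat \<Rightarrow> 'a" where
  "Ef s = (\<Sum>i<d n div 2. \<Sum>t<e. \<beta> ^ (pp ^ s * g ^ kk n i t))"

lemma Q_split: "Qf s = Lf s + Ef s"
proof -
  have "{1..n} = insert n {1..n-1}" using n1 by auto
  moreover have "n \<notin> {1..n-1}" using n1 by auto
  ultimately show ?thesis unfolding Qf_def Lf_def Ef_def by (simp add: add.commute)
qed

lemma pow4: "A ^ 4 = A \<Longrightarrow> A ^ (2 ^ (2 * u)) = A"
proof (induction u)
  case (Suc u)
  have "(2::nat) ^ (2 * Suc u) = 2 ^ (2 * u) * 4" by simp
  then have "A ^ (2 ^ (2 * Suc u)) = (A ^ (2 ^ (2 * u))) ^ 4"
    by (simp only: power_mult)
  then show ?case using Suc by simp
qed simp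

lemma Q_const:
  assumes A4: "A ^ 4 = A"
  shows "Qf s = A"
proof -
  define w where "w = (p - 1) * v * s"
  have w2: "w = 2 * ((p - 1) div 2 * v * s)" unfolding w_def using oddp by simp
  have c1: "[pp ^ s = 2 ^ w] (mod p ^ m)"
  proof -
    have "[pp ^ s = (2 ^ ((p - 1) * v)) ^ s] (mod p ^ n)" by (rule cong_pow[OF pp_two])
    then have "[pp ^ s = (2 ^ ((p - 1) * v)) ^ s] (mod p ^ m)"
      by (rule cong_dvd_modulus_nat) (use mn in \<open>simp add: le_imp_power_dvd\<close>)
    then show ?thesis unfolding w_def by (simp add: power_mult)
  qed
  have "Qf s = (\<Sum>j\<in>{1..n}. \<Sum>i<d j div 2. \<Sum>t<e. (\<beta> ^ (p ^ (n - j) * g ^ kk j i t)) ^ (2 ^ w))"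
    unfolding Qf_def
  proof (intro sum.cong refl)
    fix j i t
    have "[pp ^ s * (p ^ (n - j) * g ^ kk j i t) = p ^ (n - j) * g ^ kk j i t * 2 ^ w] (mod p ^ m)"
      using cong_mult[OF c1 cong_refl[of "p ^ (n - j) * g ^ kk j i t"]] by (simp add: mult.commute)
    then have "\<beta> ^ (pp ^ s * (p ^ (n - j) * g ^ kk j i t)) = \<beta> ^ (p ^ (n - j) * g ^ kk j i t * 2 ^ w)"
      by (rule pw_cong)
    also have "\<dots> = (\<beta> ^ (p ^ (n - j) * g ^ kk j i t)) ^ 2 ^ w" by (rule power_mult)
    finally show "\<beta> ^ (pp ^ s * (p ^ (n - j) * g ^ kk j i t)) = (\<beta> ^ (p ^ (n - j) * g ^ kk j i t)) ^ 2 ^ w" .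
  qed
  also have "\<dots> = A ^ (2 ^ w)" unfolding A_def by (simp only: char2_sum_pow2[OF char])
  also have "\<dots> = A" using pow4[OF A4] w2 by simp
  finally show ?thesis .
qed

end


context core begin

lemma pm_split: "p ^ m = p * p ^ (m - 1)"
proof -
  have "m = Suc (m - 1)" using m2 by simp
  then show ?thesis by (metis power_Suc)
qed

lemma cong_scale: "[a = b] (mod p) \<Longrightarrow> [a * p ^ (m - 1) = b * p ^ (m - 1)] (mod p ^ m)"
  unfolding cong_def pm_split by (simp add: mod_mult_mult2)

lemma pp_kap: "pp ^ (s + p ^ (m - 2) * t) = pp ^ s * kap ^ t"
  unfolding kap_def by (simp add: power_add power_mult)

lemma kap_shift: "[pp ^ s * kap ^ t * Y = pp ^ s * Y + t * (pp ^ s * Y * c * p ^ (m - 1))] (mod p ^ m)"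
proof -
  have 1: "[kap ^ t * (pp ^ s * Y) = (1 + t * c * p ^ (m - 1)) * (pp ^ s * Y)] (mod p ^ m)"
    by (rule cong_mult[OF kap_pow cong_refl])
  have 2: "kap ^ t * (pp ^ s * Y) = pp ^ s * kap ^ t * Y" by simp
  have 3: "(1 + t * c * p ^ (m - 1)) * (pp ^ s * Y) = pp ^ s * Y + t * (pp ^ s * Y * c * p ^ (m - 1))"
    by (simp add: algebra_simps)
  show ?thesis using 1 unfolding 2 3 .
qed

lemma prime_dvd3: "p dvd x * y * z \<Longrightarrow> p dvd x \<or> p dvd y \<or> p dvd z"
  using prime by (metis prime_dvd_mult_iff)

lemma inner_zero:
  assumes Y: "\<not> p dvd Y"
  shows "(\<Sum>t<p. \<beta> ^ (pp ^ s * kap ^ t * Y)) = 0"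
proof -
  define X where "X = pp ^ s * Y * c * p ^ (m - 1)"
  define \<eta> where "\<eta> = \<beta> ^ X"
  have t: "\<beta> ^ (pp ^ s * kap ^ t * Y) = \<beta> ^ (pp ^ s * Y) * \<eta> ^ t" for t
  proof -
    have "\<beta> ^ (pp ^ s * kap ^ t * Y) = \<beta> ^ (pp ^ s * Y + X * t)"
      using pw_cong[OF kap_shift[of s t Y]] unfolding X_def by (simp add: mult.commute)
    also have "\<dots> = \<beta> ^ (pp ^ s * Y) * \<eta> ^ t" unfolding \<eta>_def by (simp add: power_add power_mult)
    finally show ?thesis .
  qed
  have e1: "\<eta> ^ p = 1"
  proof -
    have "X * p = (pp ^ s * Y * c) * p ^ m" unfolding X_def pm_split by simp
    then show ?thesis unfolding \<eta>_def power_mult[symmetric] using beta by simp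
  qed
  have e2: "\<eta> \<noteq> 1"
  proof
    assume "\<eta> = 1"
    then have "p ^ m dvd X" unfolding \<eta>_def using beta by simp
    then have "p ^ (m - 1) * p dvd p ^ (m - 1) * (pp ^ s * Y * c)" unfolding X_def pm_split
      by (simp add: mult.commute mult.left_commute)
    then have "p dvd pp ^ s * Y * c" using p_pos by (simp add: nat_mult_dvd_cancel1)
    then show False using prime_dvd3 coprime_pp Y p_not_dvd_c by blast
  qed
  have "(\<Sum>t<p. \<beta> ^ (pp ^ s * kap ^ t * Y)) = \<beta> ^ (pp ^ s * Y) * (\<Sum>t<p. \<eta> ^ t)"
    by (simp add: t sum_distrib_left)
  also have "\<dots> = 0" using geom_root_sum[OF e1 e2] by simp
  finally show ?thesis .
qed

lemma L_shift:
  assumes j: "j \<in> {1..n-1}"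
  shows "[pp ^ s * kap ^ t * (p ^ (n - j) * Y) = pp ^ s * (p ^ (n - j) * Y)] (mod p ^ m)"
proof -
  have "[kap ^ t * p = 1 * p] (mod p ^ m)"
    using kap_pow_1[of t] unfolding cong_def pm_split by (simp add: mod_mult_mult2 mult.commute)
  then have "[(kap ^ t * p) * (pp ^ s * p ^ (n - j - 1) * Y) = (1 * p) * (pp ^ s * p ^ (n - j - 1) * Y)] (mod p ^ m)"
    by (rule cong_mult[OF _ cong_refl])
  moreover have "p ^ (n - j) = p * p ^ (n - j - 1)"
  proof -
    have "n - j = Suc (n - j - 1)" using j by auto
    then show ?thesis by (metis power_Suc)
  qed
  ultimately show ?thesis by (simp add: algebra_simps)
qed

lemma sum_p: "(\<Sum>t<p. (x::'a)) = x"
  using char2_odd[OF char oddp] by simp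

lemma E_zero:
  assumes A4: "A ^ 4 = A"
  shows "Ef s = 0"
proof -
  have h1: "(\<Sum>t<p. Qf (s + p ^ (m - 2) * t)) = A" using Q_const[OF A4] sum_p by simp
  have h2: "(\<Sum>t<p. Lf (s + p ^ (m - 2) * t)) = Lf s"
  proof -
    have "Lf (s + p ^ (m - 2) * t) = Lf s" for t
      unfolding Lf_def pp_kap
      by (intro sum.cong refl pw_cong L_shift) (simp_all add: mult.assoc)
    then show ?thesis using sum_p by simp
  qed
  have h3: "(\<Sum>t<p. Ef (s + p ^ (m - 2) * t)) = 0"
  proof -
    have "(\<Sum>t<p. Ef (s + p ^ (m - 2) * t)) =
        (\<Sum>t<p. \<Sum>i<d n div 2. \<Sum>tt<e. \<beta> ^ (pp ^ s * kap ^ t * g ^ kk n i tt))"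
      unfolding Ef_def pp_kap by simp
    also have "\<dots> = (\<Sum>i<d n div 2. \<Sum>t<p. \<Sum>tt<e. \<beta> ^ (pp ^ s * kap ^ t * g ^ kk n i tt))"
      by (rule sum.swap)
    also have "\<dots> = (\<Sum>i<d n div 2. \<Sum>tt<e. \<Sum>t<p. \<beta> ^ (pp ^ s * kap ^ t * g ^ kk n i tt))"
      by (intro sum.cong refl sum.swap)
    also have "\<dots> = 0" using inner_zero not_dvd_gpow by simp
    finally show ?thesis .
  qed
  have "A = (\<Sum>t<p. Lf (s + p ^ (m - 2) * t) + Ef (s + p ^ (m - 2) * t))"
    using h1 by (simp add: Q_split)
  also have "\<dots> = Lf s" using h2 h3 by (simp add: sum.distrib)
  finally have "A = Lf s" .
  moreover have "A = Lf s + Ef s" using Q_const[OF A4, of s] Q_split by simp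
  ultimately show ?thesis by simp
qed

end


context core begin

lemma ofnat_p: "(of_nat p :: 'a) = 1"
  using char2_of_nat[OF char, of p] oddp by simp

lemma fourier: "(\<Sum>t<p. \<beta> ^ (a * t * c * p ^ (m - 1))) = (if p dvd a then 1 else 0)"
proof -
  define \<eta> where "\<eta> = \<beta> ^ (a * c * p ^ (m - 1))"
  have t: "\<beta> ^ (a * t * c * p ^ (m - 1)) = \<eta> ^ t" for t
  proof -
    have "a * t * c * p ^ (m - 1) = (a * c * p ^ (m - 1)) * t" by simp
    then show ?thesis unfolding \<eta>_def by (simp only: power_mult)
  qed
  show ?thesis
  proof (cases "p dvd a")
    case True
    then obtain a' where "a = p * a'" by auto
    then have "a * c * p ^ (m - 1) = (a' * c) * p ^ m" unfolding pm_split by simp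
    then have "p ^ m dvd a * c * p ^ (m - 1)" by (metis dvd_triv_right)
    then have "\<eta> = 1" unfolding \<eta>_def using beta by simp
    then show ?thesis using True t ofnat_p by simp
  next
    case False
    have e1: "\<eta> ^ p = 1"
    proof -
      have "a * c * p ^ (m - 1) * p = (a * c) * p ^ m" unfolding pm_split by simp
      then have "p ^ m dvd a * c * p ^ (m - 1) * p" by (metis dvd_triv_right)
      then show ?thesis unfolding \<eta>_def power_mult[symmetric] using beta by simp
    qed
    have e2: "\<eta> \<noteq> 1"
    proof
      assume "\<eta> = 1"
      then have "p ^ m dvd a * c * p ^ (m - 1)" unfolding \<eta>_def using beta by simp
      then have "p ^ (m - 1) * p dvd p ^ (m - 1) * (a * c)" unfolding pm_split
        by (simp add: mult.commute mult.left_commute)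
      then have "p dvd a * c" using p_pos by (simp add: nat_mult_dvd_cancel1)
      then show False using prime False p_not_dvd_c by (metis prime_dvd_mult_iff)
    qed
    show ?thesis using geom_root_sum[OF e1 e2] False t by simp
  qed
qed

lemma fiber_inner:
  "\<beta> ^ ((p - 1) * g ^ b * c * p ^ (m - 1) * t) * \<beta> ^ (pp ^ s * kap ^ t * Y) =
   \<beta> ^ (pp ^ s * Y) * \<beta> ^ ((Y + (p - 1) * g ^ b) * t * c * p ^ (m - 1))"
proof -
  have c1: "[pp ^ s * kap ^ t * Y = pp ^ s * Y + t * (pp ^ s * Y * c * p ^ (m - 1))] (mod p ^ m)"
    by (rule kap_shift)
  have "[pp ^ s * (t * Y * c) = 1 * (t * Y * c)] (mod p)"
    using cong_mult[OF cong_pow[OF pp_mod_p, of s] cong_refl[of "t * Y * c"]] by simp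
  then have c2: "[pp ^ s * (t * Y * c) * p ^ (m - 1) = 1 * (t * Y * c) * p ^ (m - 1)] (mod p ^ m)"
    using \<open>[pp ^ s * (t * Y * c) = 1 * (t * Y * c)] (mod p)\<close> unfolding cong_def pm_split
    by (simp add: mod_mult_mult2)
  have e: "t * (pp ^ s * Y * c * p ^ (m - 1)) = pp ^ s * (t * Y * c) * p ^ (m - 1)" by (simp add: ac_simps)
  have c3: "[pp ^ s * kap ^ t * Y = pp ^ s * Y + 1 * (t * Y * c) * p ^ (m - 1)] (mod p ^ m)"
    using cong_trans[OF c1 cong_add[OF cong_refl c2[folded e]]] .
  have c4: "[(p - 1) * g ^ b * c * p ^ (m - 1) * t + pp ^ s * kap ^ t * Y =
         (p - 1) * g ^ b * c * p ^ (m - 1) * t + (pp ^ s * Y + 1 * (t * Y * c) * p ^ (m - 1))] (mod p ^ m)"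
    by (rule cong_add[OF cong_refl c3])
  have eq5: "(p - 1) * g ^ b * c * p ^ (m - 1) * t + (pp ^ s * Y + 1 * (t * Y * c) * p ^ (m - 1))
      = pp ^ s * Y + (Y + (p - 1) * g ^ b) * t * c * p ^ (m - 1)"
    by (simp add: algebra_simps)
  have c5: "[(p - 1) * g ^ b * c * p ^ (m - 1) * t + pp ^ s * kap ^ t * Y =
      pp ^ s * Y + (Y + (p - 1) * g ^ b) * t * c * p ^ (m - 1)] (mod p ^ m)"
    using c4 unfolding eq5 .
  have "\<beta> ^ ((p - 1) * g ^ b * c * p ^ (m - 1) * t + pp ^ s * kap ^ t * Y) =
      \<beta> ^ (pp ^ s * Y + (Y + (p - 1) * g ^ b) * t * c * p ^ (m - 1))"
    by (rule pw_cong[OF c5])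
  then show ?thesis by (simp add: power_add)
qed

lemma fiber_zero:
  assumes A4: "A ^ 4 = A"
  shows "(\<Sum>i<d n div 2. \<Sum>t<e. if p dvd (g ^ kk n i t + (p - 1) * g ^ b)
            then \<beta> ^ (pp ^ s * g ^ kk n i t) else 0) = 0"
proof -
  define \<theta> where "\<theta> = \<beta> ^ ((p - 1) * g ^ b * c * p ^ (m - 1))"
  have "0 = (\<Sum>t<p. \<theta> ^ t * Ef (s + p ^ (m - 2) * t))" using E_zero[OF A4] by simp
  also have "\<dots> = (\<Sum>t<p. \<Sum>i<d n div 2. \<Sum>tt<e. \<theta> ^ t * \<beta> ^ (pp ^ s * kap ^ t * g ^ kk n i tt))"
    unfolding Ef_def pp_kap by (simp add: sum_distrib_left)
  also have "\<dots> = (\<Sum>i<d n div 2. \<Sum>t<p. \<Sum>tt<e. \<theta> ^ t * \<beta> ^ (pp ^ s * kap ^ t * g ^ kk n i tt))"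
    by (rule sum.swap)
  also have "\<dots> = (\<Sum>i<d n div 2. \<Sum>tt<e. \<Sum>t<p. \<theta> ^ t * \<beta> ^ (pp ^ s * kap ^ t * g ^ kk n i tt))"
    by (intro sum.cong refl sum.swap)
  also have "\<dots> = (\<Sum>i<d n div 2. \<Sum>tt<e. if p dvd (g ^ kk n i tt + (p - 1) * g ^ b)
            then \<beta> ^ (pp ^ s * g ^ kk n i tt) else 0)"
  proof (intro sum.cong refl)
    fix i tt
    define Y where "Y = g ^ kk n i tt"
    have "(\<Sum>t<p. \<theta> ^ t * \<beta> ^ (pp ^ s * kap ^ t * Y)) =
        (\<Sum>t<p. \<beta> ^ (pp ^ s * Y) * \<beta> ^ ((Y + (p - 1) * g ^ b) * t * c * p ^ (m - 1)))"
    proof (intro sum.cong refl)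
      fix t
      have "\<theta> ^ t = \<beta> ^ ((p - 1) * g ^ b * c * p ^ (m - 1) * t)" unfolding \<theta>_def by (simp only: power_mult)
      then show "\<theta> ^ t * \<beta> ^ (pp ^ s * kap ^ t * Y) =
          \<beta> ^ (pp ^ s * Y) * \<beta> ^ ((Y + (p - 1) * g ^ b) * t * c * p ^ (m - 1))"
        using fiber_inner by simp
    qed
    also have "\<dots> = \<beta> ^ (pp ^ s * Y) * (\<Sum>t<p. \<beta> ^ ((Y + (p - 1) * g ^ b) * t * c * p ^ (m - 1)))"
      by (simp only: sum_distrib_left)
    also have "\<dots> = \<beta> ^ (pp ^ s * Y) * (if p dvd (Y + (p - 1) * g ^ b) then 1 else 0)"
      by (simp only: fourier)
    finally show "(\<Sum>t<p. \<theta> ^ t * \<beta> ^ (pp ^ s * kap ^ t * g ^ kk n i tt)) =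
        (if p dvd (g ^ kk n i tt + (p - 1) * g ^ b) then \<beta> ^ (pp ^ s * g ^ kk n i tt) else 0)"
      unfolding Y_def by simp
  qed
  finally show ?thesis by simp
qed

end


context msetup begin

definition D :: nat where "D = p ^ (n - 1) * f"
definition kq :: "nat \<Rightarrow> nat" where "kq q = (b + (p - 1) * e' * q) mod N"

lemma dn: "d n = D" unfolding d_def D_def ..
lemma N_D: "N = D * e" unfolding N_def D_def using pef by simp
lemma D_pos: "D > 0" unfolding D_def using p_pos f0 by simp
lemma D_half: "D div 2 = p ^ (n - 1) * (f div 2)" unfolding D_def using evf by (metis div_mult_swap)

lemma ee'_form: "\<exists>z. e * e' = 1 + z * p ^ (n - 1)"
proof -
  have "p ^ (n - 1) > 1" using p_gt1 n2 by (intro one_less_power) auto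
  then show ?thesis using ee' unfolding cong_to_1'_nat by auto
qed

lemma kq_mod_D: "kq q mod D = (b + f * q) mod D"
proof -
  obtain z where z: "e * e' = 1 + z * p ^ (n - 1)" using ee'_form by auto
  have "D dvd N" using N_D by simp
  then have "kq q mod D = (b + (p - 1) * e' * q) mod D" unfolding kq_def by (simp add: mod_mod_cancel)
  also have "(p - 1) * e' * q = f * q + (q * z) * D"
  proof -
    have "(p - 1) * e' * q = f * q * (e * e')" using pef by simp
    also have "\<dots> = f * q + (q * z) * D" unfolding z D_def by (simp add: algebra_simps)
    finally show ?thesis .
  qed
  finally show ?thesis by (simp add: add.assoc[symmetric])
qed

lemma kq_lt: "kq q < N"
  unfolding kq_def using N_D D_pos e0 by simp

lemma kq_mod_p1: "[kq q = b] (mod (p - 1))"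
proof -
  have "(p - 1) dvd N" unfolding N_def by simp
  then have "kq q mod (p - 1) = (b + (p - 1) * e' * q) mod (p - 1)" unfolding kq_def by (simp add: mod_mod_cancel)
  also have "\<dots> = b mod (p - 1)" by (simp add: mult.assoc)
  finally show ?thesis unfolding cong_def .
qed

lemma kk_kq: "kk n (f * q) (kq q div D) = kq q"
proof -
  have "(f * q + b) mod D = kq q mod D" using kq_mod_D[of q] by (simp add: add.commute)
  then have "kk n (f * q) (kq q div D) = kq q mod D + kq q div D * D" unfolding kk_def dn by simp
  also have "\<dots> = kq q" by (rule mod_div_mult_eq)
  finally show ?thesis .
qed

end


context msetup begin

definition Fib :: "(nat \<times> nat) set" where
  "Fib = {x \<in> {..<D div 2} \<times> {..<e}. p dvd (g ^ kk n (fst x) (snd x) + (p - 1) * g ^ b)}"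

definition hq :: "nat \<Rightarrow> nat \<times> nat" where "hq q = (f * q, kq q div D)"

lemma cong_p_iff: "p dvd (g ^ k + (p - 1) * g ^ b) \<longleftrightarrow> [g ^ k = g ^ b] (mod p)"
proof -
  have "g ^ b + (p - 1) * g ^ b = p * g ^ b" using p_pos by (simp add: algebra_simps)
  then have z: "[g ^ b + (p - 1) * g ^ b = 0] (mod p)" by (simp add: cong_0_iff)
  have "p dvd (g ^ k + (p - 1) * g ^ b) \<longleftrightarrow> [g ^ k + (p - 1) * g ^ b = 0] (mod p)" by (simp add: cong_0_iff)
  also have "\<dots> \<longleftrightarrow> [g ^ k + (p - 1) * g ^ b = g ^ b + (p - 1) * g ^ b] (mod p)"
    using z by (meson cong_sym cong_trans)
  also have "\<dots> \<longleftrightarrow> [g ^ k = g ^ b] (mod p)" by (rule cong_add_rcancel_nat)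
  finally show ?thesis .
qed

lemma cong_p_exp: "[g ^ k = g ^ b] (mod p) \<longleftrightarrow> [k = b] (mod (p - 1))"
  using exp_cong[of 1 k b] n1 by simp

lemma q_lt_L: "f * q < D div 2 \<longleftrightarrow> q < L"
proof -
  have f2: "f = 2 * (f div 2)" "f div 2 > 0" using evf f0 by auto
  have "f * q < D div 2 \<longleftrightarrow> (f div 2) * (2 * q) < (f div 2) * p ^ (n - 1)"
    unfolding D_half by (subst f2(1)) (simp add: ac_simps)
  also have "\<dots> \<longleftrightarrow> 2 * q < p ^ (n - 1)" using f2(2) by simp
  also have "\<dots> \<longleftrightarrow> q < L"
  proof -
    have "odd (p ^ (n - 1))" using oddp by simp
    then obtain k where k: "p ^ (n - 1) = 2 * k + 1" by (metis oddE)
    then have "L = k + 1" using two_L by simp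
    moreover have "2 * q < 2 * k + 1 \<longleftrightarrow> q < k + 1" by presburger
    ultimately show ?thesis using k by simp
  qed
  finally show ?thesis .
qed

lemma hq_in: "q < L \<Longrightarrow> hq q \<in> Fib"
proof -
  assume q: "q < L"
  have "kq q < e * D" using kq_lt[of q] N_D by (simp add: mult.commute)
  then have "kq q div D < e" by (rule less_mult_imp_div_less)
  moreover have "p dvd (g ^ kk n (f * q) (kq q div D) + (p - 1) * g ^ b)"
    unfolding kk_kq cong_p_iff cong_p_exp by (rule kq_mod_p1)
  ultimately show ?thesis unfolding Fib_def hq_def using q q_lt_L by simp
qed

lemma hq_inj: "inj_on hq {..<L}"
  unfolding inj_on_def hq_def using f0 by simp

lemma lcm_N: "lcm D (p - 1) = N"
proof -
  have "coprime (p ^ (n - 1)) e" using p_not_dvd_e prime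
    by (simp add: prime_imp_coprime)
  then have "lcm (p ^ (n - 1)) e = p ^ (n - 1) * e" by (simp add: lcm_coprime)
  moreover have "lcm D (p - 1) = lcm (p ^ (n - 1)) e * f"
    unfolding D_def using pef lcm_mult_right[of "p ^ (n - 1)" f e] by (simp add: lcm.commute)
  ultimately show ?thesis unfolding N_def using pef by simp
qed

lemma hq_surj: "x \<in> Fib \<Longrightarrow> x \<in> hq ` {..<L}"
proof -
  assume x: "x \<in> Fib"
  obtain i t where it: "x = (i, t)" by (cases x)
  have i: "i < D div 2" and t: "t < e" and P: "p dvd (g ^ kk n i t + (p - 1) * g ^ b)"
    using x it unfolding Fib_def by auto
  define k where "k = kk n i t"
  have kb: "[k = b] (mod (p - 1))" using P unfolding k_def cong_p_iff cong_p_exp .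
  have kD: "k mod D = (i + b) mod D" unfolding k_def kk_def dn by simp
  have "[k = i + b] (mod D)" using kD by (simp add: cong_def)
  then have "[k = i + b] (mod f)" by (rule cong_dvd_modulus_nat) (simp add: D_def)
  moreover have "[k = b] (mod f)" using kb by (rule cong_dvd_modulus_nat) (simp add: pef)
  ultimately have "[i + b = 0 + b] (mod f)" by (metis cong_sym cong_trans add_0)
  then have "[i = 0] (mod f)" using cong_add_rcancel_nat[of i b 0 f] by simp
  then have "f dvd i" by (simp add: cong_0_iff)
  then obtain q where q: "i = f * q" by auto
  have qL: "q < L" using i q q_lt_L by simp
  have kN: "k < N"
  proof -
    have "(i + b) mod D < D" using D_pos by simp
    then have "k < D + t * D" unfolding k_def kk_def dn by simp
    also have "\<dots> \<le> D * e"
    proof -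
      have "Suc t \<le> e" using t by simp
      then have "Suc t * D \<le> e * D" by (rule mult_le_mono1)
      then show ?thesis by (simp add: mult.commute)
    qed
    finally show ?thesis using N_D by simp
  qed
  have "[k = kq q] (mod D)" using kD kq_mod_D[of q] q by (simp add: cong_def add.commute)
  moreover have "[k = kq q] (mod (p - 1))" using kb kq_mod_p1[of q] by (metis cong_sym cong_trans)
  ultimately have "[k = kq q] (mod N)" using cong_cong_lcm_nat lcm_N by metis
  then have kk: "k = kq q" using kN kq_lt by (simp add: cong_less_modulus_unique_nat)
  have "k div D = t"
  proof -
    have "(i + b) mod D < D" using D_pos by simp
    then show ?thesis unfolding k_def kk_def dn using D_pos by simp
  qed
  then have "hq q = x" unfolding hq_def it using q kk by simp
  then show ?thesis using qL by blast
qed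

lemma hq_bij: "bij_betw hq {..<L} Fib"
  unfolding bij_betw_def using hq_inj hq_in hq_surj by blast

end


context core begin

lemma fiber_reindex:
  "(\<Sum>i<d n div 2. \<Sum>t<e. if p dvd (g ^ kk n i t + (p - 1) * g ^ b)
            then \<beta> ^ (pp ^ s * g ^ kk n i t) else 0) = (\<Sum>q<L. \<beta> ^ (pp ^ s * (g ^ b * pp ^ q)))"
proof -
  have "(\<Sum>i<d n div 2. \<Sum>t<e. if p dvd (g ^ kk n i t + (p - 1) * g ^ b)
            then \<beta> ^ (pp ^ s * g ^ kk n i t) else 0) =
        (\<Sum>x\<in>{..<D div 2} \<times> {..<e}. if p dvd (g ^ kk n (fst x) (snd x) + (p - 1) * g ^ b)
            then \<beta> ^ (pp ^ s * g ^ kk n (fst x) (snd x)) else 0)"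
    unfolding dn by (simp add: sum.cartesian_product case_prod_beta)
  also have "\<dots> = (\<Sum>x\<in>Fib. \<beta> ^ (pp ^ s * g ^ kk n (fst x) (snd x)))"
    unfolding Fib_def by (rule sum.inter_filter[symmetric]) simp
  also have "\<dots> = (\<Sum>q<L. \<beta> ^ (pp ^ s * g ^ kk n (fst (hq q)) (snd (hq q))))"
    by (rule sum.reindex_bij_betw[OF hq_bij, symmetric])
  also have "\<dots> = (\<Sum>q<L. \<beta> ^ (pp ^ s * (g ^ b * pp ^ q)))"
  proof (intro sum.cong refl)
    fix q
    have "kk n (fst (hq q)) (snd (hq q)) = kq q" unfolding hq_def using kk_kq by simp
    moreover have "[g ^ kq q = g ^ (b + (p - 1) * e' * q)] (mod p ^ n)"
      using exp_cong[of n] n1 unfolding kq_def N_def by (simp add: cong_def)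
    then have "[g ^ kq q = g ^ (b + (p - 1) * e' * q)] (mod p ^ m)"
      by (rule cong_dvd_modulus_nat) (use mn in \<open>simp add: le_imp_power_dvd\<close>)
    then have "[pp ^ s * g ^ kq q = pp ^ s * g ^ (b + (p - 1) * e' * q)] (mod p ^ m)"
      by (rule cong_mult[OF cong_refl])
    moreover have "g ^ (b + (p - 1) * e' * q) = g ^ b * pp ^ q" unfolding pp_def
      by (simp add: power_add power_mult)
    ultimately show "\<beta> ^ (pp ^ s * g ^ kk n (fst (hq q)) (snd (hq q))) = \<beta> ^ (pp ^ s * (g ^ b * pp ^ q))"
      using pw_cong by simp
  qed
  finally show ?thesis .
qed

theorem core_main: "A ^ 4 \<noteq> A"
proof
  assume A4: "A ^ 4 = A"
  define X where "X q = \<beta> ^ (g ^ b * pp ^ q)" for q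
  have s0: "(\<Sum>q<L. X q) = 0" using fiber_zero[OF A4, of 0] fiber_reindex[of 0] unfolding X_def by simp
  have s1: "(\<Sum>q<L. X (Suc q)) = 0"
  proof -
    have "(\<Sum>q<L. X (Suc q)) = (\<Sum>q<L. \<beta> ^ (pp ^ 1 * (g ^ b * pp ^ q)))"
      unfolding X_def by (intro sum.cong refl) (simp add: ac_simps)
    then show ?thesis using fiber_zero[OF A4, of 1] fiber_reindex[of 1] by simp
  qed
  have "X L - X 0 = (\<Sum>q<L. X (Suc q) - X q)" by (rule sum_lessThan_telescope[symmetric])
  also have "\<dots> = 0" using s0 s1 by (simp add: sum_subtractf)
  finally have "X L = X 0" by simp
  then have "[g ^ b * pp ^ L = g ^ b * pp ^ 0] (mod p ^ m)" unfolding X_def by (rule pw_eq)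
  then have "[g ^ (b + (p - 1) * e' * L) = g ^ (b + 0)] (mod p ^ m)"
    unfolding pp_def by (simp add: power_add power_mult)
  then have "[b + (p - 1) * e' * L = b + 0] (mod p ^ (m - 1) * (p - 1))"
    using exp_cong[of m] m2 mn by simp
  then have "[(p - 1) * e' * L = 0] (mod p ^ (m - 1) * (p - 1))"
    using cong_add_lcancel_nat[of b "(p - 1) * e' * L" 0] by simp
  then have "(p - 1) * p ^ (m - 1) dvd (p - 1) * (e' * L)" by (simp add: cong_0_iff ac_simps)
  then have "p ^ (m - 1) dvd e' * L" using p_gt1 by (simp add: nat_mult_dvd_cancel1)
  moreover have "p dvd p ^ (m - 1)" using m2 by (simp add: dvd_power)
  ultimately have "p dvd e' * L" by (rule dvd_trans[rotated])
  then show False using prime p_not_dvd_e' p_not_dvd_L by (metis prime_dvd_mult_iff)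
qed

end


context psetup begin

definition phi :: "nat \<Rightarrow> nat \<Rightarrow> nat \<Rightarrow> nat" where
  "phi j i t = (g ^ ((i + b) mod d j) * (g ^ (t * d j) mod (2 * p ^ j))) mod (2 * p ^ j)"

definition wv :: "nat \<Rightarrow> nat \<Rightarrow> nat \<Rightarrow> bool \<Rightarrow> nat" where
  "wv j i t s = (if s then (2 * phi j i t) mod (2 * p ^ j) else phi j i t)"

definition Psi :: "nat \<Rightarrow> nat \<Rightarrow> nat \<Rightarrow> bool \<Rightarrow> nat" where
  "Psi j i t s = (p ^ (n - j) * wv j i t s) mod (2 * p ^ n)"

lemma phi_eq: "phi j i t = g ^ kk j i t mod (2 * p ^ j)"
  unfolding phi_def kk_def by (simp add: mod_mult_right_eq power_add)

lemma wv_lt: "wv j i t s < 2 * p ^ j"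
  unfolding wv_def phi_def using p_pos by simp

lemma Psi_eq: "j \<le> n \<Longrightarrow> Psi j i t s = p ^ (n - j) * wv j i t s"
proof -
  assume j: "j \<le> n"
  have "p ^ (n - j) * wv j i t s < p ^ (n - j) * (2 * p ^ j)"
    using wv_lt p_pos by simp
  also have "\<dots> = 2 * p ^ n" using j by (simp add: power_add[symmetric])
  finally show ?thesis unfolding Psi_def by simp
qed

lemma wv_mod: "wv j i t s mod p ^ j = ((if s then 2 else 1) * g ^ kk j i t) mod p ^ j"
proof -
  have dv: "p ^ j dvd 2 * p ^ j" by simp
  show ?thesis unfolding wv_def phi_eq
    by (cases s) (simp_all add: mod_mod_cancel[OF dv] mod_mult_right_eq)
qed

lemma wv_parity: "even (wv j i t s) \<longleftrightarrow> s"
proof -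
  have ev: "even (x mod (2 * p ^ j)) \<longleftrightarrow> even x" for x :: nat
    by (metis dvd_mod_iff dvd_mult2 dvd_refl even_mod_2_iff mod_mod_cancel)
  show ?thesis unfolding wv_def phi_eq using oddg ev by (cases s) auto
qed

lemma not_p_dvd_wv: "j \<ge> 1 \<Longrightarrow> \<not> p dvd wv j i t s"
proof
  assume j: "j \<ge> 1" and a: "p dvd wv j i t s"
  have "p dvd p ^ j" using j by (simp add: dvd_power)
  then have "p dvd wv j i t s mod p ^ j" using a by (simp add: dvd_mod)
  then have "p dvd ((if s then 2 else 1) * g ^ kk j i t) mod p ^ j" by (simp add: wv_mod)
  then have "p dvd (if s then 2 else 1) * g ^ kk j i t"
    using \<open>p dvd p ^ j\<close> by (metis dvd_mod_iff)
  moreover have "\<not> p dvd (if s then 2 else 1)" using p_ge3 by (auto dest: dvd_imp_le)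
  ultimately show False using prime not_dvd_gpow by (metis prime_dvd_mult_iff)
qed

lemma pow_eq_lemma:
  assumes "p ^ a * x = p ^ a' * y" "\<not> p dvd x" "\<not> p dvd y" "a \<le> a'"
  shows "a = a'"
proof (rule ccontr)
  assume "a \<noteq> a'"
  then have "a' = a + Suc (a' - a - 1)" using assms(4) by simp
  then have "p ^ a * x = p ^ a * (p * p ^ (a' - a - 1) * y)" using assms(1)
    by (metis power_add power_Suc mult.assoc)
  then have "x = p * (p ^ (a' - a - 1) * y)" using p_pos by (simp add: mult.assoc)
  then show False using assms(2) by simp
qed

lemma kk_lt: "i < d j \<Longrightarrow> t < e \<Longrightarrow> kk j i t < d j * e"
proof -
  assume i: "i < d j" and t: "t < e"
  have dpos: "d j > 0" unfolding d_def using p_pos f0 by simp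
  have "(i + b) mod d j < d j" using dpos by simp
  then have "kk j i t < d j + t * d j" unfolding kk_def by simp
  also have "\<dots> \<le> d j * e"
  proof -
    have "Suc t \<le> e" using t by simp
    then have "Suc t * d j \<le> e * d j" by (rule mult_le_mono1)
    then show ?thesis by (simp add: mult.commute)
  qed
  finally show ?thesis .
qed

lemma dje: "1 \<le> j \<Longrightarrow> d j * e = p ^ (j - 1) * (p - 1)"
  unfolding d_def using pef by simp

lemma kk_inj:
  assumes "i < d j" "i' < d j" "kk j i t = kk j i' t'"
  shows "i = i' \<and> t = t'"
proof -
  have dpos: "d j > 0" unfolding d_def using p_pos f0 by simp
  have m1: "(i + b) mod d j < d j" "(i' + b) mod d j < d j" using dpos by auto
  have "kk j i t div d j = t" "kk j i' t' div d j = t'" unfolding kk_def using m1 dpos by simp_all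
  then have tt: "t = t'" using assms(3) by simp
  then have "(i + b) mod d j = (i' + b) mod d j" using assms(3) unfolding kk_def by simp
  then have "[i + b = i' + b] (mod d j)" by (simp add: cong_def)
  then have "[i = i'] (mod d j)" by (simp add: cong_add_rcancel_nat)
  then have "i = i'" using assms(1,2) by (simp add: cong_less_modulus_unique_nat)
  then show ?thesis using tt by simp
qed

lemma Psi_inj:
  assumes j: "j \<in> {1..n}" "i < d j" "t < e" and j': "j' \<in> {1..n}" "i' < d j'" "t' < e"
    and eq: "Psi j i t s = Psi j' i' t' s'"
  shows "j = j' \<and> i = i' \<and> t = t' \<and> s = s'"
proof -
  have e1: "p ^ (n - j) * wv j i t s = p ^ (n - j') * wv j' i' t' s'"
    using eq Psi_eq j(1) j'(1) by simp
  have nd: "\<not> p dvd wv j i t s" "\<not> p dvd wv j' i' t' s'" using not_p_dvd_wv j(1) j'(1) by auto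
  have "n - j = n - j'"
  proof (cases "n - j \<le> n - j'")
    case True then show ?thesis using pow_eq_lemma[OF e1 nd] by simp
  next
    case False then show ?thesis using pow_eq_lemma[OF e1[symmetric] nd(2,1)] by simp
  qed
  then have jj: "j = j'" using j(1) j'(1) by auto
  then have ww: "wv j i t s = wv j i' t' s'" using e1 p_pos by simp
  then have ss: "s = s'" using wv_parity by metis
  have "((if s then 2 else 1) * g ^ kk j i t) mod p ^ j = ((if s then 2 else 1) * g ^ kk j i' t') mod p ^ j"
    using ww ss wv_mod by metis
  then have "[(if s then 2 else 1) * g ^ kk j i t = (if s then 2 else 1) * g ^ kk j i' t'] (mod p ^ j)"
    by (simp add: cong_def)
  moreover have "coprime (if s then 2 else 1 :: nat) (p ^ j)" using oddp by simp
  ultimately have "[g ^ kk j i t = g ^ kk j i' t'] (mod p ^ j)" by (simp add: cong_mult_lcancel_nat)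
  then have "[kk j i t = kk j i' t'] (mod d j * e)" using exp_cong j(1) dje by simp
  then have "kk j i t = kk j i' t'"
    using kk_lt[OF j(2,3)] kk_lt[of i' j t'] j'(2,3) jj by (simp add: cong_less_modulus_unique_nat)
  then show ?thesis using kk_inj[OF j(2) _ ] j'(2) jj ss by blast
qed

lemma Psi_nz: "j \<in> {1..n} \<Longrightarrow> Psi j i t s \<noteq> 0"
proof -
  assume j: "j \<in> {1..n}"
  have "\<not> p dvd wv j i t s" using not_p_dvd_wv[of j i t s] j by auto
  then have "wv j i t s \<noteq> 0" by (metis dvd_0_right)
  then show ?thesis using Psi_eq[of j i t s] j p_pos by simp
qed

lemma Psi_cong: "j \<in> {1..n} \<Longrightarrow> [Psi j i t s = p ^ (n - j) * ((if s then 2 else 1) * g ^ kk j i t)] (mod p ^ n)"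
proof -
  assume j: "j \<in> {1..n}"
  have "p ^ (n - j) * wv j i t s mod (p ^ (n - j) * p ^ j) =
        p ^ (n - j) * ((if s then 2 else 1) * g ^ kk j i t) mod (p ^ (n - j) * p ^ j)"
    by (simp add: mod_mult_mult1 wv_mod)
  moreover have "p ^ (n - j) * p ^ j = p ^ n" using j by (simp add: power_add[symmetric])
  ultimately show ?thesis using Psi_eq j by (simp add: cong_def)
qed

end


context psetup begin

definition PsiP :: "(nat \<times> nat \<times> nat) \<times> bool \<Rightarrow> nat" where
  "PsiP x = Psi (fst (fst x)) (fst (snd (fst x))) (snd (snd (fst x))) (snd x)"

definition JS :: "(nat \<times> nat \<times> nat) set" where
  "JS = Sigma {1..n} (\<lambda>j. {..<d j div 2} \<times> {..<e})"
definition JT :: "(nat \<times> nat \<times> nat) set" where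
  "JT = Sigma {1..n} (\<lambda>j. {d j div 2..<d j} \<times> {..<e})"

lemma dd_d: "dd p f j = d j" unfolding dd_def d_def ..

lemma Dc_img: "Dc p e f g j (i + b) = (\<lambda>t. phi j i t) ` {..<e}"
  unfolding Dc_def D0_def phi_def dd_d by auto

lemma lift_Dc: "lift p n j (Dc p e f g j (i + b)) = (\<lambda>t. Psi j i t False) ` {..<e}"
  unfolding lift_def Dc_img Psi_def wv_def by (simp add: image_image)

lemma lift_tw: "lift p n j (twice p j (Dc p e f g j (i + b))) = (\<lambda>t. Psi j i t True) ` {..<e}"
  unfolding lift_def twice_def Dc_img Psi_def wv_def by (simp add: image_image)

lemma lift_Un: "lift p n j (X \<union> Y) = lift p n j X \<union> lift p n j Y"
  unfolding lift_def by (rule image_Un)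

lemma lift_UN: "lift p n j (\<Union>i\<in>I. X i) = (\<Union>i\<in>I. lift p n j (X i))"
  unfolding lift_def by (rule image_UN)

lemma C1_eq: "C1 p e f g n b = insert 0 (PsiP ` (JS \<times> UNIV))"
proof -
  have "C1 p e f g n b = insert 0 (\<Union>j\<in>{1..n}. \<Union>i\<in>{0..<d j div 2}.
      (\<lambda>t. Psi j i t False) ` {..<e} \<union> (\<lambda>t. Psi j i t True) ` {..<e})"
    unfolding C1_def dd_d by (simp only: lift_Un lift_Dc lift_tw) simp
  also have "(\<Union>j\<in>{1..n}. \<Union>i\<in>{0..<d j div 2}.
      (\<lambda>t. Psi j i t False) ` {..<e} \<union> (\<lambda>t. Psi j i t True) ` {..<e}) = PsiP ` (JS \<times> UNIV)"
  proof (rule equalityI; rule subsetI)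
    fix y assume "y \<in> (\<Union>j\<in>{1..n}. \<Union>i\<in>{0..<d j div 2}.
      (\<lambda>t. Psi j i t False) ` {..<e} \<union> (\<lambda>t. Psi j i t True) ` {..<e})"
    then obtain j where j: "j \<in> {1..n}" and y1: "y \<in> (\<Union>i\<in>{0..<d j div 2}.
      (\<lambda>t. Psi j i t False) ` {..<e} \<union> (\<lambda>t. Psi j i t True) ` {..<e})" by blast
    then obtain i where i: "i \<in> {0..<d j div 2}" and
      y2: "y \<in> (\<lambda>t. Psi j i t False) ` {..<e} \<union> (\<lambda>t. Psi j i t True) ` {..<e}" by blast
    have "\<exists>t s. t < e \<and> y = Psi j i t s"
    proof (rule UnE[OF y2])
      assume "y \<in> (\<lambda>t. Psi j i t False) ` {..<e}" then show ?thesis by auto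
    next
      assume "y \<in> (\<lambda>t. Psi j i t True) ` {..<e}" then show ?thesis by auto
    qed
    then obtain t s where t: "t < e" and y: "y = Psi j i t s" by blast
    have "((j, i, t), s) \<in> JS \<times> UNIV" unfolding JS_def using j i t by simp
    moreover have "y = PsiP ((j, i, t), s)" unfolding PsiP_def using y by simp
    ultimately show "y \<in> PsiP ` (JS \<times> UNIV)" by blast
  next
    fix y assume "y \<in> PsiP ` (JS \<times> UNIV)"
    then obtain x where x: "x \<in> JS \<times> UNIV" "y = PsiP x" by blast
    obtain j i t s where xe: "x = ((j, i, t), s)" by (metis prod.collapse)
    have ji: "j \<in> {1..n}" "i \<in> {0..<d j div 2}" and t: "t < e" using x(1) unfolding xe JS_def by auto
    have y: "y = Psi j i t s" using x(2) unfolding xe PsiP_def by simp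
    have "y \<in> (\<lambda>t. Psi j i t s) ` {..<e}" using t y by simp
    moreover have "(\<lambda>t. Psi j i t s) ` {..<e} \<subseteq> (\<lambda>t. Psi j i t False) ` {..<e} \<union> (\<lambda>t. Psi j i t True) ` {..<e}"
      by (cases s) auto
    ultimately have "y \<in> (\<lambda>t. Psi j i t False) ` {..<e} \<union> (\<lambda>t. Psi j i t True) ` {..<e}"
      by (rule subsetD[rotated])
    then have "y \<in> (\<Union>i\<in>{0..<d j div 2}.
      (\<lambda>t. Psi j i t False) ` {..<e} \<union> (\<lambda>t. Psi j i t True) ` {..<e})"
      by (rule UN_I[OF ji(2)])
    then show "y \<in> (\<Union>j\<in>{1..n}. \<Union>i\<in>{0..<d j div 2}.
      (\<lambda>t. Psi j i t False) ` {..<e} \<union> (\<lambda>t. Psi j i t True) ` {..<e})"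
      by (rule UN_I[OF ji(1)])
  qed
  finally show ?thesis .
qed

lemma C1t_eq: "C1t p e f g n b = insert 0 (PsiP ` (JS \<times> {False} \<union> JT \<times> {True}))"
proof -
  have "C1t p e f g n b = insert 0 (\<Union>j\<in>{1..n}.
      (\<Union>i\<in>{0..<d j div 2}. (\<lambda>t. Psi j i t False) ` {..<e}) \<union>
      (\<Union>i\<in>{d j div 2..<d j}. (\<lambda>t. Psi j i t True) ` {..<e}))"
  proof -
    have "lift p n j ((\<Union>i\<in>{0..<d j div 2}. Dc p e f g j (i + b)) \<union>
         (\<Union>i\<in>{d j div 2..<d j}. twice p j (Dc p e f g j (i + b)))) =
      (\<Union>i\<in>{0..<d j div 2}. (\<lambda>t. Psi j i t False) ` {..<e}) \<union>
      (\<Union>i\<in>{d j div 2..<d j}. (\<lambda>t. Psi j i t True) ` {..<e})" for j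
      by (simp only: lift_Un lift_UN lift_Dc lift_tw)
    then show ?thesis unfolding C1t_def dd_d by simp
  qed
  also have "(\<Union>j\<in>{1..n}.
      (\<Union>i\<in>{0..<d j div 2}. (\<lambda>t. Psi j i t False) ` {..<e}) \<union>
      (\<Union>i\<in>{d j div 2..<d j}. (\<lambda>t. Psi j i t True) ` {..<e})) = PsiP ` (JS \<times> {False} \<union> JT \<times> {True})"
  proof (rule equalityI; rule subsetI)
    fix y assume "y \<in> (\<Union>j\<in>{1..n}.
      (\<Union>i\<in>{0..<d j div 2}. (\<lambda>t. Psi j i t False) ` {..<e}) \<union>
      (\<Union>i\<in>{d j div 2..<d j}. (\<lambda>t. Psi j i t True) ` {..<e}))"
    then obtain j where j: "j \<in> {1..n}" and y1: "y \<in> (\<Union>i\<in>{0..<d j div 2}. (\<lambda>t. Psi j i t False) ` {..<e}) \<union>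
      (\<Union>i\<in>{d j div 2..<d j}. (\<lambda>t. Psi j i t True) ` {..<e})" by blast
    show "y \<in> PsiP ` (JS \<times> {False} \<union> JT \<times> {True})" using y1
    proof (rule UnE)
      assume "y \<in> (\<Union>i\<in>{0..<d j div 2}. (\<lambda>t. Psi j i t False) ` {..<e})"
      then obtain i t where i: "i \<in> {0..<d j div 2}" and t: "t < e" and y: "y = Psi j i t False" by blast
      have "((j, i, t), False) \<in> JS \<times> {False} \<union> JT \<times> {True}" unfolding JS_def using j i t by simp
      moreover have "y = PsiP ((j, i, t), False)" unfolding PsiP_def using y by simp
      ultimately show ?thesis by blast
    next
      assume "y \<in> (\<Union>i\<in>{d j div 2..<d j}. (\<lambda>t. Psi j i t True) ` {..<e})"
      then obtain i t where i: "i \<in> {d j div 2..<d j}" and t: "t < e" and y: "y = Psi j i t True" by blast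
      have "((j, i, t), True) \<in> JS \<times> {False} \<union> JT \<times> {True}" unfolding JT_def using j i t by simp
      moreover have "y = PsiP ((j, i, t), True)" unfolding PsiP_def using y by simp
      ultimately show ?thesis by blast
    qed
  next
    fix y assume "y \<in> PsiP ` (JS \<times> {False} \<union> JT \<times> {True})"
    then obtain x where x: "x \<in> JS \<times> {False} \<union> JT \<times> {True}" "y = PsiP x" by blast
    obtain j i t s where xe: "x = ((j, i, t), s)" by (metis prod.collapse)
    have j: "j \<in> {1..n}" and t: "t < e" and c: "(\<not> s \<and> i < d j div 2) \<or> (s \<and> d j div 2 \<le> i \<and> i < d j)"
      using x(1) unfolding xe JS_def JT_def by auto
    have y: "y = Psi j i t s" using x(2) unfolding xe PsiP_def by simp
    have "y \<in> (\<Union>i\<in>{0..<d j div 2}. (\<lambda>t. Psi j i t False) ` {..<e}) \<union>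
      (\<Union>i\<in>{d j div 2..<d j}. (\<lambda>t. Psi j i t True) ` {..<e})"
    proof (cases s)
      case True
      then have "y \<in> (\<lambda>t. Psi j i t True) ` {..<e}" "i \<in> {d j div 2..<d j}" using t y c by auto
      then show ?thesis by blast
    next
      case False
      then have "y \<in> (\<lambda>t. Psi j i t False) ` {..<e}" "i \<in> {0..<d j div 2}" using t y c by auto
      then show ?thesis by blast
    qed
    then show "y \<in> (\<Union>j\<in>{1..n}.
      (\<Union>i\<in>{0..<d j div 2}. (\<lambda>t. Psi j i t False) ` {..<e}) \<union>
      (\<Union>i\<in>{d j div 2..<d j}. (\<lambda>t. Psi j i t True) ` {..<e}))"
      using j by blast
  qed
  finally show ?thesis .
qed

lemma PsiP_inj: "inj_on PsiP (Sigma {1..n} (\<lambda>j. {..<d j} \<times> {..<e}) \<times> UNIV)"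
  unfolding inj_on_def PsiP_def using Psi_inj by auto

lemma PsiP_nz: "x \<in> Sigma {1..n} (\<lambda>j. {..<d j} \<times> {..<e}) \<times> UNIV \<Longrightarrow> PsiP x \<noteq> 0"
  unfolding PsiP_def using Psi_nz by auto

lemma JS_sub: "JS \<times> UNIV \<subseteq> Sigma {1..n} (\<lambda>j. {..<d j} \<times> {..<e}) \<times> UNIV"
  unfolding JS_def by auto

lemma JT_sub: "JS \<times> {False} \<union> JT \<times> {True} \<subseteq> Sigma {1..n} (\<lambda>j. {..<d j} \<times> {..<e}) \<times> UNIV"
  unfolding JS_def JT_def by auto

end


lemma poly_ind_poly: "poly (ind_poly C) (x :: 'a :: comm_ring_1) = (\<Sum>t\<in>C. x ^ t)"
  unfolding ind_poly_def by (simp add: poly_sum poly_monom)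

context core begin

definition A' :: 'a where
  "A' = (\<Sum>j\<in>{1..n}. \<Sum>i\<in>{d j div 2..<d j}. \<Sum>t<e. \<beta> ^ (p ^ (n - j) * g ^ kk j i t))"

lemma sum_JS: "(\<Sum>a\<in>JS. F a) = (\<Sum>j\<in>{1..n}. \<Sum>i<d j div 2. \<Sum>t<e. F (j, i, t))"
proof -
  have "(\<Sum>a\<in>JS. F a) = (\<Sum>j\<in>{1..n}. \<Sum>x\<in>{..<d j div 2} \<times> {..<e}. F (j, x))"
    unfolding JS_def using sum.Sigma[of "{1..n}" "\<lambda>j. {..<d j div 2} \<times> {..<e}" "\<lambda>j x. F (j, x)"] by simp
  also have "\<dots> = (\<Sum>j\<in>{1..n}. \<Sum>i<d j div 2. \<Sum>t<e. F (j, i, t))"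
    by (simp add: sum.cartesian_product split_def)
  finally show ?thesis .
qed

lemma sum_JT: "(\<Sum>a\<in>JT. F a) = (\<Sum>j\<in>{1..n}. \<Sum>i\<in>{d j div 2..<d j}. \<Sum>t<e. F (j, i, t))"
proof -
  have "(\<Sum>a\<in>JT. F a) = (\<Sum>j\<in>{1..n}. \<Sum>x\<in>{d j div 2..<d j} \<times> {..<e}. F (j, x))"
    unfolding JT_def using sum.Sigma[of "{1..n}" "\<lambda>j. {d j div 2..<d j} \<times> {..<e}" "\<lambda>j x. F (j, x)"] by simp
  also have "\<dots> = (\<Sum>j\<in>{1..n}. \<Sum>i\<in>{d j div 2..<d j}. \<Sum>t<e. F (j, i, t))"
    by (simp add: sum.cartesian_product split_def)
  finally show ?thesis .
qed

lemma beta_PsiP: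
  assumes "a \<in> Sigma {1..n} (\<lambda>j. {..<d j} \<times> {..<e})"
  shows "\<beta> ^ PsiP (a, s) = (if s then (\<beta> ^ (p ^ (n - fst a) * g ^ kk (fst a) (fst (snd a)) (snd (snd a))))\<^sup>2
                          else \<beta> ^ (p ^ (n - fst a) * g ^ kk (fst a) (fst (snd a)) (snd (snd a))))"
proof -
  obtain j i t where a: "a = (j, i, t)" by (metis prod.collapse)
  have j: "j \<in> {1..n}" using assms a by auto
  have "[Psi j i t s = p ^ (n - j) * ((if s then 2 else 1) * g ^ kk j i t)] (mod p ^ m)"
    by (rule cong_dvd_modulus_nat[OF Psi_cong[OF j]]) (use mn in \<open>simp add: le_imp_power_dvd\<close>)
  then have "\<beta> ^ Psi j i t s = \<beta> ^ (p ^ (n - j) * ((if s then 2 else 1) * g ^ kk j i t))"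
    by (rule pw_cong)
  then show ?thesis unfolding a PsiP_def
    by (cases s) (simp_all add: power_mult[symmetric] ac_simps)
qed

lemma JS_mem: "a \<in> JS \<Longrightarrow> a \<in> Sigma {1..n} (\<lambda>j. {..<d j} \<times> {..<e})"
  unfolding JS_def by auto

lemma JT_mem: "a \<in> JT \<Longrightarrow> a \<in> Sigma {1..n} (\<lambda>j. {..<d j} \<times> {..<e})"
  unfolding JT_def by auto

lemma S_val: "poly (ind_poly (C1 p e f g n b)) \<beta> = 1 + A + A\<^sup>2"
proof -
  have fin: "finite (JS \<times> (UNIV :: bool set))" unfolding JS_def by simp
  have inj: "inj_on PsiP (JS \<times> UNIV)" by (rule inj_on_subset[OF PsiP_inj JS_sub])
  have nz: "0 \<notin> PsiP ` (JS \<times> UNIV)"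
  proof
    assume "0 \<in> PsiP ` (JS \<times> UNIV)"
    then obtain x where x: "x \<in> JS \<times> UNIV" "0 = PsiP x" by (rule imageE)
    have xs: "x \<in> Sigma {1..n} (\<lambda>j. {..<d j} \<times> {..<e}) \<times> UNIV" by (rule subsetD[OF JS_sub x(1)])
    show False using PsiP_nz[OF xs] x(2) by simp
  qed
  have "poly (ind_poly (C1 p e f g n b)) \<beta> = (\<Sum>y\<in>insert 0 (PsiP ` (JS \<times> UNIV)). \<beta> ^ y)"
    unfolding poly_ind_poly C1_eq ..
  also have "\<dots> = 1 + (\<Sum>y\<in>PsiP ` (JS \<times> UNIV). \<beta> ^ y)"
    using sum.insert[OF finite_imageI[OF fin] nz, of "\<lambda>y. \<beta> ^ y"] by simp
  also have "(\<Sum>y\<in>PsiP ` (JS \<times> UNIV). \<beta> ^ y) = (\<Sum>x\<in>JS \<times> UNIV. \<beta> ^ PsiP x)"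
    by (rule sum.reindex[OF inj, unfolded comp_def])
  also have "\<dots> = (\<Sum>a\<in>JS. \<Sum>s\<in>UNIV. \<beta> ^ PsiP (a, s))"
    by (simp add: sum.cartesian_product)
  also have "\<dots> = (\<Sum>a\<in>JS. \<beta> ^ PsiP (a, False) + \<beta> ^ PsiP (a, True))"
    by (simp add: UNIV_bool add.commute)
  also have "\<dots> = (\<Sum>a\<in>JS. \<beta> ^ (p ^ (n - fst a) * g ^ kk (fst a) (fst (snd a)) (snd (snd a))) +
                   (\<beta> ^ (p ^ (n - fst a) * g ^ kk (fst a) (fst (snd a)) (snd (snd a))))\<^sup>2)"
  proof (intro sum.cong refl)
    fix a assume "a \<in> JS"
    then have a: "a \<in> Sigma {1..n} (\<lambda>j. {..<d j} \<times> {..<e})" by (rule JS_mem)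
    show "\<beta> ^ PsiP (a, False) + \<beta> ^ PsiP (a, True) = \<beta> ^ (p ^ (n - fst a) * g ^ kk (fst a) (fst (snd a)) (snd (snd a))) +
                   (\<beta> ^ (p ^ (n - fst a) * g ^ kk (fst a) (fst (snd a)) (snd (snd a))))\<^sup>2"
      using beta_PsiP[OF a, of False] beta_PsiP[OF a, of True] by simp
  qed
  also have "\<dots> = A + A\<^sup>2"
    unfolding sum.distrib A_def char2_sum_sq[OF char] sum_JS by simp
  finally show ?thesis by (simp add: add.assoc)
qed

lemma St_val: "poly (ind_poly (C1t p e f g n b)) \<beta> = 1 + A + A'\<^sup>2"
proof -
  let ?I = "JS \<times> {False} \<union> JT \<times> {True}"
  have fin: "finite ?I" unfolding JS_def JT_def by simp
  have inj: "inj_on PsiP ?I" by (rule inj_on_subset[OF PsiP_inj JT_sub])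
  have nz: "0 \<notin> PsiP ` (?I)"
  proof
    assume "0 \<in> PsiP ` (?I)"
    then obtain x where x: "x \<in> ?I" "0 = PsiP x" by (rule imageE)
    have xs: "x \<in> Sigma {1..n} (\<lambda>j. {..<d j} \<times> {..<e}) \<times> UNIV" by (rule subsetD[OF JT_sub x(1)])
    show False using PsiP_nz[OF xs] x(2) by simp
  qed
  have "poly (ind_poly (C1t p e f g n b)) \<beta> = (\<Sum>y\<in>insert 0 (PsiP ` ?I). \<beta> ^ y)"
    unfolding poly_ind_poly C1t_eq ..
  also have "\<dots> = 1 + (\<Sum>y\<in>PsiP ` ?I. \<beta> ^ y)"
    using sum.insert[OF finite_imageI[OF fin] nz, of "\<lambda>y. \<beta> ^ y"] by simp
  also have "(\<Sum>y\<in>PsiP ` ?I. \<beta> ^ y) = (\<Sum>x\<in>?I. \<beta> ^ PsiP x)"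
    by (rule sum.reindex[OF inj, unfolded comp_def])
  also have "\<dots> = (\<Sum>x\<in>JS \<times> {False}. \<beta> ^ PsiP x) + (\<Sum>x\<in>JT \<times> {True}. \<beta> ^ PsiP x)"
    by (rule sum.union_disjoint) (auto simp: JS_def JT_def)
  also have "(\<Sum>x\<in>JS \<times> {False}. \<beta> ^ PsiP x) = (\<Sum>a\<in>JS. \<beta> ^ PsiP (a, False))"
  proof -
    have "JS \<times> {False} = (\<lambda>a. (a, False)) ` JS" by auto
    moreover have "inj_on (\<lambda>a. (a, False)) JS" by (simp add: inj_on_def)
    ultimately show ?thesis by (simp add: sum.reindex)
  qed
  also have "(\<Sum>x\<in>JT \<times> {True}. \<beta> ^ PsiP x) = (\<Sum>a\<in>JT. \<beta> ^ PsiP (a, True))"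
  proof -
    have "JT \<times> {True} = (\<lambda>a. (a, True)) ` JT" by auto
    moreover have "inj_on (\<lambda>a. (a, True)) JT" by (simp add: inj_on_def)
    ultimately show ?thesis by (simp add: sum.reindex)
  qed
  also have "(\<Sum>a\<in>JS. \<beta> ^ PsiP (a, False)) = A"
  proof -
    have "(\<Sum>a\<in>JS. \<beta> ^ PsiP (a, False)) = (\<Sum>a\<in>JS. \<beta> ^ (p ^ (n - fst a) * g ^ kk (fst a) (fst (snd a)) (snd (snd a))))"
      using beta_PsiP[OF JS_mem, of _ False] by (intro sum.cong refl) simp
    then show ?thesis unfolding A_def sum_JS by simp
  qed
  also have "(\<Sum>a\<in>JT. \<beta> ^ PsiP (a, True)) = A'\<^sup>2"
  proof -
    have "(\<Sum>a\<in>JT. \<beta> ^ PsiP (a, True)) = (\<Sum>a\<in>JT. (\<beta> ^ (p ^ (n - fst a) * g ^ kk (fst a) (fst (snd a)) (snd (snd a))))\<^sup>2)"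
      using beta_PsiP[OF JT_mem, of _ True] by (intro sum.cong refl) simp
    then show ?thesis unfolding A'_def char2_sum_sq[OF char] sum_JT by simp
  qed
  finally show ?thesis by (simp add: add.assoc)
qed

end


context psetup begin

lemma kk_bij: "j \<ge> 1 \<Longrightarrow> bij_betw (\<lambda>x. kk j (fst x) (snd x)) ({..<d j} \<times> {..<e}) {..<d j * e}"
proof -
  assume j: "j \<ge> 1"
  have inj: "inj_on (\<lambda>x. kk j (fst x) (snd x)) ({..<d j} \<times> {..<e})"
  proof (rule inj_onI)
    fix x y assume x: "x \<in> {..<d j} \<times> {..<e}" and y: "y \<in> {..<d j} \<times> {..<e}"
      and eq: "kk j (fst x) (snd x) = kk j (fst y) (snd y)"
    have "fst x < d j" "fst y < d j" using x y by auto
    then have "fst x = fst y \<and> snd x = snd y" using kk_inj eq by blast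
    then show "x = y" by (simp add: prod_eq_iff)
  qed
  have sub: "(\<lambda>x. kk j (fst x) (snd x)) ` ({..<d j} \<times> {..<e}) \<subseteq> {..<d j * e}"
  proof (rule image_subsetI)
    fix x assume x: "x \<in> {..<d j} \<times> {..<e}"
    then have "fst x < d j" "snd x < e" by auto
    then show "kk j (fst x) (snd x) \<in> {..<d j * e}" using kk_lt by simp
  qed
  have "card ((\<lambda>x. kk j (fst x) (snd x)) ` ({..<d j} \<times> {..<e})) = card {..<d j * e}"
    using card_image[OF inj] by (simp add: card_cartesian_product)
  then have "(\<lambda>x. kk j (fst x) (snd x)) ` ({..<d j} \<times> {..<e}) = {..<d j * e}"
    using sub by (intro card_subset_eq) auto
  then show ?thesis using inj unfolding bij_betw_def by simp
qed

lemma primroot_j: "j \<in> {1..n} \<Longrightarrow> residue_primroot (p ^ j) g"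
proof -
  assume j: "j \<in> {1..n}"
  have "coprime (p ^ j) g" using coprime_pg by simp
  moreover have "ord (p ^ j) g = totient (p ^ j)"
    using primroot_ord_down[OF prime prim, of j] j prime by (simp add: totient_prime_power)
  ultimately show ?thesis using p_pos by (simp add: residue_primroot_def)
qed

end

lemma sum_pos_ivl_geom:
  fixes \<omega> :: "'a::field"
  assumes "\<omega> ^ P = 1"
  shows "(\<Sum>y\<in>{0<..P}. \<omega> ^ y) = (if \<omega> = 1 then of_nat P else 0)"
proof -
  have "{0<..P} = {1..P}" by auto
  then have "{0<..P} = Suc ` {..<P}" by (simp add: image_Suc_lessThan)
  then have "(\<Sum>y\<in>{0<..P}. \<omega> ^ y) = (\<Sum>y<P. \<omega> ^ Suc y)" by (simp add: sum.reindex)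
  also have "\<dots> = \<omega> * (\<Sum>y<P. \<omega> ^ y)" by (simp add: sum_distrib_left)
  also have "\<dots> = (if \<omega> = 1 then of_nat P else 0)"
    using geom_root_sum[OF assms] by auto
  finally show ?thesis .
qed

context core begin

lemma tot_sum:
  assumes j: "j \<in> {1..n}"
  shows "(\<Sum>y\<in>totatives (p ^ j). \<beta> ^ (p ^ (n - j) * y)) =
         (if m \<le> n - j then 1 else 0) + (if m \<le> n - j + 1 then 1 else 0)"
proof -
  define \<omega> where "\<omega> = \<beta> ^ (p ^ (n - j))"
  have jj: "j = Suc (j - 1)" using j by simp
  have pj: "p ^ j = p * p ^ (j - 1)" by (metis jj power_Suc)
  have w1: "\<omega> ^ (p ^ j) = 1"
  proof -
    have "p ^ (n - j) * p ^ j = p ^ n" using j by (simp add: power_add[symmetric])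
    moreover have "p ^ m dvd p ^ n" using mn by (simp add: le_imp_power_dvd)
    ultimately show ?thesis unfolding \<omega>_def power_mult[symmetric] using beta by simp
  qed
  have w2: "(\<omega> ^ p) ^ (p ^ (j - 1)) = 1" using w1 pj by (simp add: power_mult[symmetric])
  have tot: "totatives (p ^ j) = {0<..p ^ j} - (\<lambda>z. p * z) ` {0<..p ^ (j - 1)}"
    using totatives_prime_power_Suc[OF prime, of "j - 1"] jj by metis
  have sub: "(\<lambda>z. p * z) ` {0<..p ^ (j - 1)} \<subseteq> {0<..p ^ j}" using pj p_pos by auto
  have "(\<Sum>y\<in>totatives (p ^ j). \<beta> ^ (p ^ (n - j) * y)) = (\<Sum>y\<in>totatives (p ^ j). \<omega> ^ y)"
    unfolding \<omega>_def by (simp add: power_mult)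
  also have "\<dots> = (\<Sum>y\<in>{0<..p ^ j}. \<omega> ^ y) - (\<Sum>y\<in>(\<lambda>z. p * z) ` {0<..p ^ (j - 1)}. \<omega> ^ y)"
    unfolding tot by (rule sum_diff[OF _ sub]) simp
  also have "(\<Sum>y\<in>(\<lambda>z. p * z) ` {0<..p ^ (j - 1)}. \<omega> ^ y) = (\<Sum>z\<in>{0<..p ^ (j - 1)}. (\<omega> ^ p) ^ z)"
    using p_pos by (subst sum.reindex) (auto simp: inj_on_def power_mult)
  also have "(\<Sum>z\<in>{0<..p ^ (j - 1)}. (\<omega> ^ p) ^ z) = (if \<omega> ^ p = 1 then 1 else 0)"
    using sum_pos_ivl_geom[OF w2] char2_of_nat[OF char, of "p ^ (j - 1)"] oddp by simp
  also have "(\<Sum>y\<in>{0<..p ^ j}. \<omega> ^ y) = (if \<omega> = 1 then 1 else 0)"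
    using sum_pos_ivl_geom[OF w1] char2_of_nat[OF char, of "p ^ j"] oddp by simp
  also have "\<omega> = 1 \<longleftrightarrow> m \<le> n - j"
    unfolding \<omega>_def beta using p_ge3 by (simp add: dvd_power_iff_le)
  also have "\<omega> ^ p = 1 \<longleftrightarrow> m \<le> n - j + 1"
  proof -
    have "\<omega> ^ p = \<beta> ^ (p ^ (n - j + 1))" unfolding \<omega>_def by (simp add: power_mult[symmetric] mult.commute)
    then have "\<omega> ^ p = 1 \<longleftrightarrow> p ^ m dvd p ^ (n - j + 1)" by (simp only: beta)
    also have "\<dots> \<longleftrightarrow> m \<le> n - j + 1" by (rule dvd_power_iff_le) (use p_ge3 in simp)
    finally show ?thesis .
  qed
  finally show ?thesis using char2_minus[OF char] by (simp add: diff_conv_add_uminus)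
qed

end


context core begin

lemma AA': "A + A' = 1"
proof -
  have "A + A' = (\<Sum>j\<in>{1..n}. \<Sum>i<d j. \<Sum>t<e. \<beta> ^ (p ^ (n - j) * g ^ kk j i t))"
    unfolding A_def A'_def sum.distrib[symmetric]
  proof (intro sum.cong refl)
    fix j
    have "d j div 2 \<le> d j" by simp
    then show "(\<Sum>i<d j div 2. \<Sum>t<e. \<beta> ^ (p ^ (n - j) * g ^ kk j i t)) +
          (\<Sum>i = d j div 2..<d j. \<Sum>t<e. \<beta> ^ (p ^ (n - j) * g ^ kk j i t)) =
          (\<Sum>i<d j. \<Sum>t<e. \<beta> ^ (p ^ (n - j) * g ^ kk j i t))"
      using sum.atLeastLessThan_concat[of 0 "d j div 2" "d j"] by (simp add: atLeast0LessThan)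
  qed
  also have "\<dots> = (\<Sum>j\<in>{1..n}. (if m \<le> n - j then 1 else 0) + (if m \<le> n - j + 1 then 1 else 0))"
  proof (intro sum.cong refl)
    fix j assume j: "j \<in> {1..n}"
    have pj1: "p ^ j > 1" using j p_gt1 by (intro one_less_power) auto
    have "(\<Sum>i<d j. \<Sum>t<e. \<beta> ^ (p ^ (n - j) * g ^ kk j i t)) =
          (\<Sum>x\<in>{..<d j} \<times> {..<e}. \<beta> ^ (p ^ (n - j) * g ^ kk j (fst x) (snd x)))"
      by (simp add: sum.cartesian_product split_def)
    also have "\<dots> = (\<Sum>k<d j * e. \<beta> ^ (p ^ (n - j) * g ^ k))"
      using kk_bij[of j] j by (intro sum.reindex_bij_betw) auto
    also have "\<dots> = (\<Sum>k<totient (p ^ j). \<beta> ^ (p ^ (n - j) * (g ^ k mod p ^ j)))"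
    proof -
      have t: "totient (p ^ j) = d j * e" using j dje prime by (simp add: totient_prime_power)
      have "\<beta> ^ (p ^ (n - j) * g ^ k) = \<beta> ^ (p ^ (n - j) * (g ^ k mod p ^ j))" for k
      proof (rule pw_cong)
        have "p ^ (n - j) * p ^ j = p ^ n" using j by (simp add: power_add[symmetric])
        then have "[p ^ (n - j) * g ^ k = p ^ (n - j) * (g ^ k mod p ^ j)] (mod p ^ n)"
          unfolding cong_def by (metis mod_mult_mult1 mod_mod_trivial)
        then show "[p ^ (n - j) * g ^ k = p ^ (n - j) * (g ^ k mod p ^ j)] (mod p ^ m)"
          by (rule cong_dvd_modulus_nat) (use mn in \<open>simp add: le_imp_power_dvd\<close>)
      qed
      then show ?thesis unfolding t by simp
    qed
    also have "\<dots> = (\<Sum>y\<in>totatives (p ^ j). \<beta> ^ (p ^ (n - j) * y))"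
      using residue_primroot_is_generator[OF pj1 primroot_j[OF j]]
      by (rule sum.reindex_bij_betw)
    also have "\<dots> = (if m \<le> n - j then 1 else 0) + (if m \<le> n - j + 1 then 1 else 0)"
      by (rule tot_sum[OF j])
    finally show "(\<Sum>i<d j. \<Sum>t<e. \<beta> ^ (p ^ (n - j) * g ^ kk j i t)) =
        (if m \<le> n - j then 1 else 0) + (if m \<le> n - j + 1 then 1 else 0)" .
  qed
  also have "\<dots> = (\<Sum>j\<in>{1..n}. if j = n - m + 1 then 1 else 0)"
  proof (intro sum.cong refl)
    fix j assume j: "j \<in> {1..n}"
    show "(if m \<le> n - j then 1 else 0) + (if m \<le> n - j + 1 then 1 else 0) =
          (if j = n - m + 1 then (1::'a) else 0)"
    proof (cases "m \<le> n - j")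
      case True
      then have "j \<noteq> n - m + 1" using m2 by auto
      then show ?thesis using True char2_add_self[OF char, of 1] by simp
    next
      case False
      then show ?thesis using j m2 mn by auto
    qed
  qed
  also have "\<dots> = 1" using m2 mn by simp
  finally show ?thesis .
qed

lemma S_ne: "poly (ind_poly (C1 p e f g n b)) \<beta> \<noteq> 0"
proof
  assume "poly (ind_poly (C1 p e f g n b)) \<beta> = 0"
  then have z: "1 + A + A\<^sup>2 = 0" using S_val by simp
  have a2: "A\<^sup>2 = 1 + A"
  proof -
    have "(1 + A) + A\<^sup>2 = 0" using z by (simp add: add.assoc)
    then have "- (1 + A) = A\<^sup>2" by (rule minus_unique)
    then have "A\<^sup>2 = - (1 + A)" by simp
    then show ?thesis using char2_minus[OF char] by simp
  qed
  have "A ^ 4 = (A\<^sup>2)\<^sup>2" by (simp add: power_mult[symmetric])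
  also have "\<dots> = 1 + A\<^sup>2" unfolding a2 char2_sq_add[OF char] by simp
  also have "\<dots> = (1 + 1) + A" unfolding a2 by (simp add: add.assoc)
  also have "\<dots> = A" using char2_add_self[OF char, of 1] by simp
  finally show False using core_main by simp
qed

lemma St_ne: "poly (ind_poly (C1t p e f g n b)) \<beta> \<noteq> 0"
proof
  assume "poly (ind_poly (C1t p e f g n b)) \<beta> = 0"
  then have z: "1 + A + A'\<^sup>2 = 0" using St_val by simp
  have a': "A' = 1 + A"
  proof -
    have "A' = 1 - A" using AA' by (simp add: eq_diff_eq add.commute)
    then show ?thesis using char2_minus[OF char] by (simp add: diff_conv_add_uminus)
  qed
  have "0 = 1 + A + (1 + A\<^sup>2)" using z unfolding a' char2_sq_add[OF char] by simp
  also have "\<dots> = (1 + 1) + (A + A\<^sup>2)" by (simp add: ac_simps)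
  also have "\<dots> = A + A\<^sup>2" using char2_add_self[OF char, of 1] by simp
  finally have "A\<^sup>2 = - A" by (simp add: eq_neg_iff_add_eq_0 add.commute)
  then have a2: "A\<^sup>2 = A" using char2_minus[OF char] by simp
  have "A ^ 4 = (A\<^sup>2)\<^sup>2" by (simp add: power_mult[symmetric])
  also have "\<dots> = A" unfolding a2 a2 ..
  finally show False using core_main by simp
qed

end


lemma prim_root_iff:
  fixes \<alpha> :: "'a::field"
  assumes "primitive_root_of_unity M \<alpha>" "M > 0"
  shows "\<alpha> ^ x = 1 \<longleftrightarrow> M dvd x"
proof -
  have a1: "\<alpha> ^ M = 1" and a2: "\<And>k. 0 < k \<Longrightarrow> k < M \<Longrightarrow> \<alpha> ^ k \<noteq> 1"
    using assms(1) unfolding primitive_root_of_unity_def by auto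
  have "\<alpha> ^ x = \<alpha> ^ (x mod M)"
  proof -
    have "\<alpha> ^ x = \<alpha> ^ (M * (x div M) + x mod M)" by simp
    also have "\<dots> = (\<alpha> ^ M) ^ (x div M) * \<alpha> ^ (x mod M)" by (simp only: power_add power_mult)
    finally show ?thesis using a1 by simp
  qed
  moreover have "\<alpha> ^ (x mod M) = 1 \<longleftrightarrow> x mod M = 0"
    using a2[of "x mod M"] assms(2) by (cases "x mod M = 0") auto
  ultimately show ?thesis by (simp add: dvd_eq_mod_eq_0)
qed

theorem proposition2:
  fixes p e f n g b :: nat and \<alpha> :: "'a::field"
  assumes "prime p" and "odd p" and "p = e * f + 1" and "e > 0" and "f > 0" and "even f"
    and "\<not> [2 ^ (p - 1) = 1] (mod p ^ 2)"
    and "n \<ge> 1"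
    and "odd g" and "residue_primroot (p ^ n) g"
    and "b < p ^ (n - 1) * f"
    and "CHAR('a) = 2"
    and "primitive_root_of_unity (p ^ n) \<alpha>"
  shows "\<forall>i \<in> {0..<p ^ n} - {(p ^ (n - 1) * k) mod p ^ n | k. True}.
           poly (ind_poly (C1 p e f g n b)) (\<alpha> ^ i) \<noteq> 0 \<and>
           poly (ind_poly (C1t p e f g n b)) (\<alpha> ^ i) \<noteq> 0"
proof
  fix i assume i: "i \<in> {0..<p ^ n} - {(p ^ (n - 1) * k) mod p ^ n | k. True}"
  interpret ps: psetup p e f g n b
    using assms by unfold_locales auto
  have ilt: "i < p ^ n" using i by simp
  have nmul: "\<And>k. i \<noteq> (p ^ (n - 1) * k) mod p ^ n" using i by blast
  have i0: "i \<noteq> 0" using nmul[of 0] by auto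
  have pnu: "\<not> is_unit p" using prime_gt_1_nat[OF assms(1)] by simp
  obtain y where iy: "i = p ^ multiplicity p i * y" and py: "\<not> p dvd y"
    using multiplicity_decompose'[OF i0 pnu] by blast
  define v where "v = multiplicity p i"
  have vn: "v + 2 \<le> n"
  proof (rule ccontr)
    assume "\<not> v + 2 \<le> n"
    then have "n - 1 \<le> v" by simp
    then have "p ^ (n - 1) dvd i" unfolding v_def by (rule multiplicity_dvd')
    then obtain k where "i = p ^ (n - 1) * k" by auto
    then have "i = (p ^ (n - 1) * k) mod p ^ n" using ilt by simp
    then show False using nmul by blast
  qed
  define m where "m = n - v"
  have m2: "2 \<le> m" and mn: "m \<le> n" using vn unfolding m_def by auto
  have pn: "p ^ n > 0" using assms(1) by (simp add: prime_gt_0_nat)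
  have beta: "(\<alpha> ^ i) ^ x = 1 \<longleftrightarrow> p ^ m dvd x" for x
  proof -
    have "(\<alpha> ^ i) ^ x = 1 \<longleftrightarrow> p ^ n dvd i * x"
      using prim_root_iff[OF assms(13) pn, of "i * x"] by (simp only: power_mult)
    also have "p ^ n = p ^ v * p ^ m" unfolding m_def using vn by (simp add: power_add[symmetric])
    also have "i * x = p ^ v * (y * x)" using iy unfolding v_def by simp
    also have "p ^ v * p ^ m dvd p ^ v * (y * x) \<longleftrightarrow> p ^ m dvd y * x"
      using assms(1) by (simp add: prime_gt_0_nat)
    also have "\<dots> \<longleftrightarrow> p ^ m dvd x"
    proof -
      have "coprime (p ^ m) y" using prime_imp_coprime[OF assms(1) py] by simp
      then show ?thesis by (simp add: coprime_dvd_mult_right_iff)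
    qed
    finally show ?thesis .
  qed
  interpret co: core p e f g n b m "\<alpha> ^ i"
    using assms m2 mn beta by unfold_locales auto
  show "poly (ind_poly (C1 p e f g n b)) (\<alpha> ^ i) \<noteq> 0 \<and>
           poly (ind_poly (C1t p e f g n b)) (\<alpha> ^ i) \<noteq> 0"
    using co.S_ne co.St_ne by simp
qed


end
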